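(* Let $\{A(t);t\ge0\}$ be a non-homogeneous Poisson process on $[0,\infty)$ with rate function $\lambda$. For each $s\ge0$ let $B_s$ be a nonnegative random variable (law depending on $s$) and $F_s$ a CDF on $[0,\infty)$ with finite mean $\mathcal{E}_s[S_1(s)]$, where $S_1(s)$ has CDF $F_s$. For each integer $m\ge1$ consider the infinite-server queue, starting empty, in which batches arrive at the points of $A$, a batch arriving at time $s$ has size $\lceil mB_s\rceil$, and given its size the customers of that batch bring i.i.d. amounts of work with CDF $F_s$, batches being independent of each other and of $A$; a customer arriving at time $s$ with work $S$ departs at $s+S$. Let $W_m(t)$, $Q_m(t)$, $D_m(t)$ be the workload at time $t$, number of customers present at time $t$, and number of departures in $(0,t]$, and set $\overline{W}_m=W_m/m$, $\overline{Q}_m=Q_m/m$, $\overline{D}_m=D_m/m$. Then for each $t\ge0$ and all $\alpha,\beta,\gamma\ge0$, $$\lim_{m\to\infty}\mathbb{E}\big[e^{-\alpha\overline{W}_m(t)-\beta\overline{Q}_m(t)-\gamma\overline{D}_m(t)}\big]=\exp\Big(-\int_0^t\mathcal{E}_s\Big[1-e^{-B_s\left[\alpha\mathcal{E}_s[S_1(s)]\overline{F}^e_s(t-s)+\beta\overline{F}_s(t-s)+\gamma F_s(t-s)\right]}\Big]\lambda(s)\,ds\Big).$$ In particular, $$\lim_{m\to\infty}\mathbb{E}\big[e^{-\alpha\overline{W}_m(t)}\big]=\exp\Big(-\int_0^t\mathcal{E}_s\Big[1-e^{-B_s\alpha\mathcal{E}_s[S_1(s)]\overline{F}^e_s(t-s)}\Big]\lambda(s)\,ds\Big),$$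 so $\overline{W}_m(t)$ converges in distribution to the value at time $t$ of the shot-noise process $\int_0^tB_s\,\mathcal{E}_s[S_1(s)]\overline{F}^e_s(t-s)\,A(ds)$.
   Context: $\mathcal{E}_s$ denotes expectation with respect to the laws of $B_s$ and of the work amounts of a batch arriving at time $s$. $\overline{F}_s=1-F_s$. The workload $W_m(t)$ is the total remaining work $\sum(S-(t-s))^+$ over all customers arrived by time $t$. $\overline{F}^e_s$ is the tail of the stationary excess (equilibrium) distribution of $F_s$: $\overline{F}^e_s(u):=\frac{1}{\mathcal{E}_s[S_1(s)]}\int_u^\infty\overline{F}_s(v)\,dv$, so that $\mathcal{E}_s[S_1(s)]\overline{F}^e_s(u)=\mathcal{E}_s[(S_1(s)-u)^+]$. *)

theory Defs
  imports "HOL-Probability.Probability"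
begin

definition cum_rate :: "(real \<Rightarrow> real) \<Rightarrow> real \<Rightarrow> real" where
  "cum_rate lam t = (LINT s:{0..t}|lborel. lam s)"

text \<open>Number of points of the non-homogeneous Poisson process A in [0,t]:
  Poisson with mean cum_rate lam t (the degenerate Poisson(0) law is the point mass at 0).\<close>
definition num_arrivals :: "(real \<Rightarrow> real) \<Rightarrow> real \<Rightarrow> nat pmf" where
  "num_arrivals lam t =
     (if cum_rate lam t = 0 then return_pmf 0 else poisson_pmf (cum_rate lam t))"

text \<open>Law of a single arrival epoch of A in [0,t] (density lam/cum_rate on [0,t]);
  the value for cum_rate = 0 is irrelevant since then there are a.s. no arrivals.\<close>
definition arrival_time_dist :: "(real \<Rightarrow> real) \<Rightarrow> real \<Rightarrow> real measure" where
  "arrival_time_dist lam t =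
     (if cum_rate lam t = 0 then return borel 0
      else density lborel (\<lambda>s. ennreal (indicator {0..t} s * lam s / cum_rate lam t)))"

text \<open>Mark of a batch: (arrival epoch s, value b of B_s, i.i.d. work amounts S_1,S_2,... with law F_s).
  Only the first nat(ceiling(m b)) work amounts belong to the batch.\<close>
definition mark_space :: "(real \<times> real \<times> (nat \<Rightarrow> real)) measure" where
  "mark_space = borel \<Otimes>\<^sub>M (borel \<Otimes>\<^sub>M PiM UNIV (\<lambda>_::nat. borel))"

definition mark_dist ::
  "(real \<Rightarrow> real) \<Rightarrow> (real \<Rightarrow> real measure) \<Rightarrow> (real \<Rightarrow> real measure) \<Rightarrow> real
   \<Rightarrow> (real \<times> real \<times> (nat \<Rightarrow> real)) measure" where
  "mark_dist lam B Sd t =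
     arrival_time_dist lam t \<bind> (\<lambda>s. B s \<bind>
       (\<lambda>b. distr (PiM UNIV (\<lambda>_::nat. Sd s)) mark_space (\<lambda>S. (s, b, S))))"

text \<open>Sample space of the system up to time t: number N of batches arrived in [0,t] and
  an i.i.d. sequence of marks, independent of N (the first N of them are the batches).\<close>
definition queue_sample ::
  "(real \<Rightarrow> real) \<Rightarrow> (real \<Rightarrow> real measure) \<Rightarrow> (real \<Rightarrow> real measure) \<Rightarrow> real
   \<Rightarrow> (nat \<times> (nat \<Rightarrow> real \<times> real \<times> (nat \<Rightarrow> real))) measure" where
  "queue_sample lam B Sd t =
     measure_pmf (num_arrivals lam t) \<Otimes>\<^sub>M PiM UNIV (\<lambda>_::nat. mark_dist lam B Sd t)"

definition batch_size :: "nat \<Rightarrow> real \<Rightarrow> nat" where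
  "batch_size m b = nat \<lceil>real m * b\<rceil>"

definition workload :: "nat \<Rightarrow> real \<Rightarrow> nat \<times> (nat \<Rightarrow> real \<times> real \<times> (nat \<Rightarrow> real)) \<Rightarrow> real" where
  "workload m t \<omega> = (\<Sum>i<fst \<omega>. (case snd \<omega> i of (s, b, S) \<Rightarrow>
      \<Sum>j<batch_size m b. max 0 (S j - (t - s))))"

definition num_present :: "nat \<Rightarrow> real \<Rightarrow> nat \<times> (nat \<Rightarrow> real \<times> real \<times> (nat \<Rightarrow> real)) \<Rightarrow> real" where
  "num_present m t \<omega> = (\<Sum>i<fst \<omega>. (case snd \<omega> i of (s, b, S) \<Rightarrow>
      real (card {j. j < batch_size m b \<and> t < s + S j})))"

definition num_departed :: "nat \<Rightarrow> real \<Rightarrow> nat \<times> (nat \<Rightarrow> real \<times> real \<times> (nat \<Rightarrow> real)) \<Rightarrow> real" where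
  "num_departed m t \<omega> = (\<Sum>i<fst \<omega>. (case snd \<omega> i of (s, b, S) \<Rightarrow>
      real (card {j. j < batch_size m b \<and> 0 < s + S j \<and> s + S j \<le> t})))"

definition mean_work :: "(real \<Rightarrow> real measure) \<Rightarrow> real \<Rightarrow> real" where
  "mean_work Sd s = (\<integral>x. x \<partial>Sd s)"

definition Fbar :: "(real \<Rightarrow> real measure) \<Rightarrow> real \<Rightarrow> real \<Rightarrow> real" where
  "Fbar Sd s u = 1 - cdf (Sd s) u"

definition Fbar_e :: "(real \<Rightarrow> real measure) \<Rightarrow> real \<Rightarrow> real \<Rightarrow> real" where
  "Fbar_e Sd s u = (1 / mean_work Sd s) * (LINT v:{u..}|lborel. Fbar Sd s v)"

text \<open>Law of the shot-noise value int_0^t B_s E_s[S_1(s)] Fbar^e_s(t-s) A(ds), built from the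
  same Poisson construction of A on [0,t] with independent marks B_s.\<close>
definition shot_noise ::
  "(real \<Rightarrow> real) \<Rightarrow> (real \<Rightarrow> real measure) \<Rightarrow> (real \<Rightarrow> real measure) \<Rightarrow> real \<Rightarrow> real measure" where
  "shot_noise lam B Sd t = distr (queue_sample lam B Sd t) borel
     (\<lambda>\<omega>. \<Sum>i<fst \<omega>. (case snd \<omega> i of (s, b, S) \<Rightarrow>
        b * mean_work Sd s * Fbar_e Sd s (t - s)))"

end

theory Submission
  imports Defs
begin

definition qexp :: "complex \<Rightarrow> complex" where
  "qexp w = (if w = 0 then 1 else (exp w - 1) / w)"

lemma qexp_cont: "isCont qexp 0"
proof -
  have "((\<lambda>y. (exp y - exp 0) / (y - 0)) \<longlongrightarrow> exp (0::complex)) (at 0)"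
    using DERIV_exp[of "0::complex"] by (simp add: has_field_derivative_iff)
  then have "((\<lambda>y. (exp y - 1) / y) \<longlongrightarrow> (1::complex)) (at 0)" by simp
  moreover have "\<forall>\<^sub>F y in at 0. (exp y - 1) / y = qexp y"
    by (auto simp: qexp_def eventually_at_filter)
  ultimately have "(qexp \<longlongrightarrow> 1) (at 0)"
    by (rule Lim_transform_eventually)
  then have "(qexp \<longlongrightarrow> qexp 0) (at 0)" by (simp add: qexp_def)
  then show ?thesis by (simp add: isCont_def)
qed

lemma qexp_eq: "exp w - 1 = w * qexp w"
  by (simp add: qexp_def)

lemma lim_m_exp:
  fixes c :: complex
  shows "(\<lambda>m::nat. of_nat m * (exp (c / of_nat m) - 1)) \<longlonglongrightarrow> c"
proof -
  have "(\<lambda>m::nat. c * of_real (inverse (real m))) \<longlonglongrightarrow> c * of_real 0"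
    by (intro tendsto_mult tendsto_const tendsto_of_real lim_inverse_n)
  then have "(\<lambda>m::nat. c / of_nat m) \<longlonglongrightarrow> 0"
    by (simp add: divide_inverse)
  then have "(\<lambda>m::nat. qexp (c / of_nat m)) \<longlonglongrightarrow> qexp 0"
    by (rule isCont_tendsto_compose[OF qexp_cont])
  then have "(\<lambda>m::nat. c * qexp (c / of_nat m)) \<longlonglongrightarrow> c * 1"
    by (intro tendsto_mult tendsto_const) (simp add: qexp_def)
  moreover have "eventually (\<lambda>m::nat. c * qexp (c / of_nat m) = of_nat m * (exp (c / of_nat m) - 1)) sequentially"
    using eventually_gt_at_top[of "0::nat"]
    by eventually_elim (simp add: qexp_eq)
  ultimately show ?thesis by (simp add: tendsto_cong)
qed

lemma lim_pow:
  fixes z :: "nat \<Rightarrow> complex" and n :: "nat \<Rightarrow> nat"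
  assumes z1: "\<And>m. cmod (z m) \<le> 1"
    and zl: "(\<lambda>m. of_nat m * (z m - 1)) \<longlonglongrightarrow> L"
    and nb: "(\<lambda>m. real (n m) / real m) \<longlonglongrightarrow> b"
  shows "(\<lambda>m. z m ^ n m) \<longlonglongrightarrow> exp (of_real b * L)"
proof -
  define w where "w m = z m - 1" for m
  have ev: "eventually (\<lambda>m::nat. 0 < m) sequentially" by (rule eventually_gt_at_top)
  have "(\<lambda>m. (of_nat m * w m) * of_real (inverse (real m))) \<longlonglongrightarrow> L * of_real 0"
    unfolding w_def by (intro tendsto_mult zl tendsto_of_real lim_inverse_n)
  then have "(\<lambda>m. (of_nat m * w m) * of_real (inverse (real m))) \<longlonglongrightarrow> 0" by simp
  moreover have "eventually (\<lambda>m. (of_nat m * w m) * of_real (inverse (real m)) = w m) sequentially"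
    using ev by eventually_elim (simp add: field_simps)
  ultimately have w0: "w \<longlonglongrightarrow> 0" by (rule Lim_transform_eventually)
  have e1: "(\<lambda>m. exp (of_real (real (n m) / real m) * (of_nat m * w m))) \<longlonglongrightarrow> exp (of_real b * L)"
    unfolding w_def by (intro tendsto_exp tendsto_mult tendsto_of_real nb zl)
  have "eventually (\<lambda>m. exp (of_real (real (n m) / real m) * (of_nat m * w m)) = exp (w m) ^ n m) sequentially"
    using ev by eventually_elim (simp add: exp_of_nat_mult[symmetric] field_simps)
  with e1 have e2: "(\<lambda>m. exp (w m) ^ n m) \<longlonglongrightarrow> exp (of_real b * L)" by (rule Lim_transform_eventually)
  have "(\<lambda>m. (real (n m) / real m) * cmod (of_nat m * w m) * cmod (qexp (w m) - 1)) \<longlonglongrightarrow> b * cmod L * cmod (qexp 0 - 1)"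
    unfolding w_def
    by (intro tendsto_mult nb tendsto_norm zl tendsto_diff tendsto_const isCont_tendsto_compose[OF qexp_cont] w0[unfolded w_def])
  then have r0: "(\<lambda>m. (real (n m) / real m) * cmod (of_nat m * w m) * cmod (qexp (w m) - 1)) \<longlonglongrightarrow> 0"
    by (simp add: qexp_def)
  have bound: "eventually (\<lambda>m. norm (z m ^ n m - exp (w m) ^ n m) \<le> (real (n m) / real m) * cmod (of_nat m * w m) * cmod (qexp (w m) - 1)) sequentially"
    using ev
  proof eventually_elim
    case (elim m)
    have ew: "cmod (exp (w m)) \<le> 1"
    proof -
      have "Re (z m) \<le> 1" using z1[of m] abs_Re_le_cmod[of "z m"] by linarith
      then show ?thesis by (simp add: w_def)
    qed
    have "norm (z m ^ n m - exp (w m) ^ n m) \<le> n m * norm (z m - exp (w m))"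
      by (rule norm_power_diff[OF z1 ew])
    also have "z m - exp (w m) = - (w m * (qexp (w m) - 1))"
      using qexp_eq[of "w m"] by (simp add: w_def algebra_simps)
    also have "real (n m) * norm (- (w m * (qexp (w m) - 1))) = (real (n m) / real m) * cmod (of_nat m * w m) * cmod (qexp (w m) - 1)"
      using elim by (simp add: norm_mult)
    finally show ?case by simp
  qed
  have "(\<lambda>m. z m ^ n m - exp (w m) ^ n m) \<longlonglongrightarrow> 0"
    by (rule tendsto_norm_zero_cancel, rule Lim_null_comparison[OF _ r0]) (use bound in simp)
  from tendsto_add[OF this e2] show ?thesis by simp
qed

lemma phi_lim:
  fixes z :: complex and f :: "'a \<Rightarrow> real"
  assumes M: "prob_space M" and fm: "f \<in> borel_measurable M" and fi: "integrable M f"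
    and nn: "AE x in M. 0 \<le> f x" and Rez: "Re z \<le> 0"
    and H: "\<And>y. 0 \<le> y \<Longrightarrow> cmod (exp (z * of_real y) - 1) \<le> cmod z * y"
  shows "(\<lambda>m::nat. of_nat m * ((\<integral>x. exp (z * of_real (f x) / of_nat m) \<partial>M) - 1))
           \<longlonglongrightarrow> z * of_real (\<integral>x. f x \<partial>M)"
proof -
  interpret prob_space M by fact
  define s where "s m x = of_nat m * (exp (z * of_real (f x) / of_nat m) - 1)" for m :: nat and x
  have sm: "s m \<in> borel_measurable M" for m unfolding s_def using fm by measurable
  have ie: "integrable M (\<lambda>x. exp (z * of_real (f x) / of_nat m))" for m :: nat
  proof (rule Bochner_Integration.integrable_bound[where f="\<lambda>_. 1::real"])
    show "AE x in M. norm (exp (z * of_real (f x) / of_nat m)) \<le> norm (1::real)"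
      using nn
    proof eventually_elim
      case (elim x)
      have "Re (z * of_real (f x) / of_nat m) = Re z * f x / real m"
        by (simp add: Re_divide_of_nat)
      also have "\<dots> \<le> 0" using Rez elim by (simp add: divide_nonpos_nonneg mult_nonpos_nonneg)
      finally show ?case by simp
    qed
  qed (use fm in auto)
  have eq: "(\<integral>x. s m x \<partial>M) = of_nat m * ((\<integral>x. exp (z * of_real (f x) / of_nat m) \<partial>M) - 1)" for m
    unfolding s_def using ie[of m] by (simp add: prob_space)
  have "(\<lambda>m. \<integral>x. s m x \<partial>M) \<longlonglongrightarrow> (\<integral>x. z * of_real (f x) \<partial>M)"
  proof (rule integral_dominated_convergence[where w="\<lambda>x. cmod z * f x"])
    show "(\<lambda>x. z * of_real (f x)) \<in> borel_measurable M" using fm by measurable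
    show "integrable M (\<lambda>x. cmod z * f x)" using fi by simp
    show "AE x in M. (\<lambda>m. s m x) \<longlonglongrightarrow> z * of_real (f x)"
      unfolding s_def using lim_m_exp[of "z * of_real (f x)" for x] by simp
    show "AE x in M. norm (s m x) \<le> cmod z * f x" for m
      using nn
    proof eventually_elim
      case (elim x)
      show ?case
      proof (cases "m = 0")
        case True then show ?thesis using elim by (simp add: s_def)
      next
        case False
        have "cmod (exp (z * of_real (f x / real m)) - 1) \<le> cmod z * (f x / real m)"
          using H[of "f x / real m"] elim by simp
        then have "real m * cmod (exp (z * of_real (f x / real m)) - 1) \<le> cmod z * f x"
          using False by (simp add: field_simps)
        then show ?thesis by (simp add: s_def norm_mult)
      qed
    qed
  qed (use sm in auto)
  moreover have "(\<integral>x. z * of_real (f x) \<partial>M) = z * of_real (\<integral>x. f x \<partial>M)" by simp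
  ultimately show ?thesis unfolding eq by simp
qed

lemma H_real:
  assumes "0 \<le> a" "0 \<le> y"
  shows "cmod (exp (- complex_of_real a * of_real y) - 1) \<le> cmod (- complex_of_real a) * y"
proof -
  have "exp (- complex_of_real a * of_real y) - 1 = of_real (exp (- a * y) - 1)"
    by (metis exp_of_real of_real_1 of_real_diff of_real_minus of_real_mult)
  moreover have "\<bar>exp (- a * y) - 1\<bar> \<le> a * y"
  proof -
    have "0 \<le> a * y" using assms by simp
    then have "exp (- a * y) \<le> 1" by simp
    then show ?thesis using exp_ge_add_one_self[of "- a * y"] by simp
  qed
  ultimately show ?thesis using assms by (metis norm_of_real abs_of_nonneg norm_minus_cancel mult_minus_left of_real_minus norm_of_real)
qed

lemma H_imag:
  shows "cmod (exp (\<i> * complex_of_real \<theta> * of_real y) - 1) \<le> cmod (\<i> * complex_of_real \<theta>) * \<bar>y\<bar>"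
proof -
  have 1: "cmod (exp (\<i> * complex_of_real (\<theta> * y)) - (\<Sum>k\<le>0. (\<i> * complex_of_real (\<theta> * y)) ^ k / fact k)) \<le> \<bar>\<theta> * y\<bar> ^ Suc 0 / fact (Suc 0)"
    by (rule iexp_approx1)
  have 2: "(\<Sum>k\<le>0. (\<i> * complex_of_real (\<theta> * y)) ^ k / fact k) = 1" by simp
  have 3: "\<i> * complex_of_real \<theta> * of_real y = \<i> * complex_of_real (\<theta> * y)" by simp
  have 4: "cmod (\<i> * complex_of_real \<theta>) * \<bar>y\<bar> = \<bar>\<theta> * y\<bar>" by (simp add: abs_mult norm_mult)
  have 5: "\<bar>\<theta> * y\<bar> ^ Suc 0 / fact (Suc 0) = \<bar>\<theta> * y\<bar>" by simp
  show ?thesis unfolding 3 4 using 1 unfolding 2 5 .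
qed

lemma ceil_ratio:
  fixes b :: real assumes "0 \<le> b"
  shows "(\<lambda>m::nat. real (nat \<lceil>real m * b\<rceil>) / real m) \<longlonglongrightarrow> b"
proof -
  have "(\<lambda>m::nat. b + inverse (real m)) \<longlonglongrightarrow> b + 0"
    by (intro tendsto_add tendsto_const lim_inverse_n)
  then have up: "(\<lambda>m::nat. b + inverse (real m)) \<longlonglongrightarrow> b" by simp
  show ?thesis
  proof (rule tendsto_sandwich[OF _ _ tendsto_const up])
    show "\<forall>\<^sub>F m in sequentially. b \<le> real (nat \<lceil>real m * b\<rceil>) / real m"
      using eventually_gt_at_top[of "0::nat"]
    proof eventually_elim
      case (elim m)
      have "real m * b \<le> real (nat \<lceil>real m * b\<rceil>)"
      proof -
        have "0 \<le> real m * b" using assms by simp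
        then have "0 \<le> \<lceil>real m * b\<rceil>" by simp
        then show ?thesis using le_of_int_ceiling[of "real m * b"] by (simp add: of_nat_nat)
      qed
      then show ?case using elim by (simp add: field_simps)
    qed
    show "\<forall>\<^sub>F m in sequentially. real (nat \<lceil>real m * b\<rceil>) / real m \<le> b + inverse (real m)"
      using eventually_gt_at_top[of "0::nat"]
    proof eventually_elim
      case (elim m)
      have "real (nat \<lceil>real m * b\<rceil>) \<le> real m * b + 1"
      proof -
        have "0 \<le> real m * b" using assms by simp
        then have "0 \<le> \<lceil>real m * b\<rceil>" by simp
        then show ?thesis using ceiling_correct[of "real m * b"] by (simp add: of_nat_nat)
      qed
      then show ?case using elim by (simp add: field_simps)
    qed
  qed
qed

lemma pow_lim:
  fixes z :: complex and f :: "'a \<Rightarrow> real"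
  assumes M: "prob_space M" and fm: "f \<in> borel_measurable M" and fi: "integrable M f"
    and nn: "AE x in M. 0 \<le> f x" and Rez: "Re z \<le> 0"
    and H: "\<And>y. 0 \<le> y \<Longrightarrow> cmod (exp (z * of_real y) - 1) \<le> cmod z * y"
    and b: "0 \<le> b"
  shows "(\<lambda>m::nat. (\<integral>x. exp (z * of_real (f x) / of_nat m) \<partial>M) ^ nat \<lceil>real m * b\<rceil>)
           \<longlonglongrightarrow> exp (of_real b * (z * of_real (\<integral>x. f x \<partial>M)))"
proof (rule lim_pow[OF _ phi_lim[OF assms(1-6)] ceil_ratio[OF b]])
  interpret prob_space M by fact
  fix m :: nat
  have "cmod (\<integral>x. exp (z * of_real (f x) / of_nat m) \<partial>M) \<le> (\<integral>x. cmod (exp (z * of_real (f x) / of_nat m)) \<partial>M)"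
    by (rule integral_norm_bound)
  also have "\<dots> \<le> (\<integral>x. 1 \<partial>M)"
  proof (rule integral_mono_AE)
    show "integrable M (\<lambda>x. 1::real)" by simp
    show "integrable M (\<lambda>x. cmod (exp (z * of_real (f x) / of_nat m)))"
    proof (rule Bochner_Integration.integrable_bound[where f="\<lambda>_. 1::real"])
      show "AE x in M. norm (cmod (exp (z * of_real (f x) / of_nat m))) \<le> norm (1::real)"
        using nn
      proof eventually_elim
        case (elim x)
        have "Re (z * of_real (f x) / of_nat m) = Re z * f x / real m"
          by (simp add: Re_divide_of_nat)
        also have "\<dots> \<le> 0" using Rez elim by (simp add: divide_nonpos_nonneg mult_nonpos_nonneg)
        finally show ?case by simp
      qed
    qed (use fm in auto)
    show "AE x in M. cmod (exp (z * of_real (f x) / of_nat m)) \<le> 1"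
      using nn
    proof eventually_elim
      case (elim x)
      have "Re (z * of_real (f x) / of_nat m) = Re z * f x / real m"
        by (simp add: Re_divide_of_nat)
      also have "\<dots> \<le> 0" using Rez elim by (simp add: divide_nonpos_nonneg mult_nonpos_nonneg)
      finally show ?case by simp
    qed
  qed
  finally show "cmod (\<integral>x. exp (z * of_real (f x) / of_nat m) \<partial>M) \<le> 1" by (simp add: prob_space)
qed


lemma PiM_kernel:
  assumes Sd: "Sd \<in> borel \<rightarrow>\<^sub>M prob_algebra (borel::real measure)"
  shows "(\<lambda>s. PiM (UNIV::nat set) (\<lambda>_. Sd s)) \<in> (borel::real measure) \<rightarrow>\<^sub>M prob_algebra (PiM UNIV (\<lambda>_. (borel::real measure)))"
proof (rule measurable_prob_algebra_generated[OF sets_PiM Int_stable_prod_algebra prod_algebra_sets_into_space])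
  fix s :: real
  have ps: "prob_space (Sd s)" and ss: "sets (Sd s) = sets borel"
    using measurable_space[OF Sd, of s] by (auto simp: space_prob_algebra)
  then show "prob_space (PiM UNIV (\<lambda>_. Sd s))" by (intro prob_space_PiM) auto
  show "sets (PiM UNIV (\<lambda>_. Sd s)) = sets (PiM UNIV (\<lambda>_. borel))"
    using ss by (intro sets_PiM_cong) auto
next
  fix A assume "A \<in> prod_algebra UNIV (\<lambda>_::nat. (borel::real measure))"
  then obtain J E where A: "A = prod_emb UNIV (\<lambda>_. borel) J (Pi\<^sub>E J E)" "finite J"
      "\<And>i. i \<in> J \<Longrightarrow> E i \<in> sets borel"
    by (auto elim!: prod_algebraE)
  have "(\<lambda>s. emeasure (PiM UNIV (\<lambda>_. Sd s)) A) = (\<lambda>s. \<Prod>j\<in>J. emeasure (Sd s) (E j))"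
  proof
    fix s
    have ps: "prob_space (Sd s)" and ss: "sets (Sd s) = sets borel"
      using measurable_space[OF Sd, of s] by (auto simp: space_prob_algebra)
    have sp: "space (Sd s) = UNIV" using sets_eq_imp_space_eq[OF ss] by simp
    have "A = prod_emb UNIV (\<lambda>_. Sd s) J (Pi\<^sub>E J E)"
      using A(1) sp by (simp add: prod_emb_def)
    moreover have "emeasure (PiM UNIV (\<lambda>_. Sd s)) (prod_emb UNIV (\<lambda>_. Sd s) J (Pi\<^sub>E J E)) = (\<Prod>j\<in>J. emeasure (Sd s) (E j))"
      by (rule emeasure_PiM_emb) (use ps ss A in auto)
    ultimately show "emeasure (PiM UNIV (\<lambda>_. Sd s)) A = (\<Prod>j\<in>J. emeasure (Sd s) (E j))"
      by simp
  qed
  moreover have "(\<lambda>s. \<Prod>j\<in>J. emeasure (Sd s) (E j)) \<in> borel_measurable borel"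
    using A Sd by (intro borel_measurable_prod_ennreal measurable_emeasure_kernel[OF measurable_prob_algebraD]) auto
  ultimately show "(\<lambda>s. emeasure (PiM UNIV (\<lambda>_. Sd s)) A) \<in> borel_measurable borel" by simp
qed


lemma prob_integrable_bound:
  fixes f :: "_ \<Rightarrow> 'b::{banach,second_countable_topology}"
  assumes "prob_space N" "sets N = sets K" "f \<in> borel_measurable K" "\<And>x. x \<in> space K \<Longrightarrow> norm (f x) \<le> C"
  shows "integrable N f"
proof -
  interpret prob_space N by fact
  have sp: "space N = space K" using assms(2) by (rule sets_eq_imp_space_eq)
  show ?thesis
    using assms(3,4) by (intro integrable_const_bound[where B=C]) (auto simp: sp cong: measurable_cong_sets[OF assms(2) refl])
qed

lemma integral_bind_complex:
  fixes f :: "_ \<Rightarrow> complex"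
  assumes fm[measurable]: "f \<in> borel_measurable K"
    and fb: "\<And>x. x \<in> space K \<Longrightarrow> cmod (f x) \<le> C"
    and N[measurable]: "N \<in> M \<rightarrow>\<^sub>M prob_algebra K"
    and P: "prob_space M"
  shows "integral\<^sup>L (M \<bind> N) f = (\<integral>x. integral\<^sup>L (N x) f \<partial>M)"
proof -
  interpret prob_space M by fact
  have Ns: "N \<in> M \<rightarrow>\<^sub>M subprob_algebra K" using N by (rule measurable_prob_algebraD)
  have aeB: "AE x in M. emeasure (N x) (space (N x)) \<le> ennreal 1"
    using measurable_space[OF N] by (auto simp: space_prob_algebra prob_space.emeasure_space_1)
  have fin: "finite_measure M" by (simp add: finite_measure_axioms)
  have bRe: "\<bar>Re (f x)\<bar> \<le> C" if "x \<in> space K" for x using fb[OF that] abs_Re_le_cmod[of "f x"] by linarith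
  have bIm: "\<bar>Im (f x)\<bar> \<le> C" if "x \<in> space K" for x using fb[OF that] abs_Im_le_cmod[of "f x"] by linarith
  have intK: "integrable (N x) f" if "x \<in> space M" for x
  proof -
    have "prob_space (N x)" "sets (N x) = sets K" using measurable_space[OF N that] by (auto simp: space_prob_algebra)
    then show ?thesis
      using fb by (intro prob_integrable_bound[where K=K and C=C]) auto
  qed
  have intB: "integrable (M \<bind> N) f"
  proof -
    have "prob_space (M \<bind> N)" "sets (M \<bind> N) = sets K"
      using prob_space_bind'[of M M N K] sets_bind'[of M M N K] N P by (auto simp: space_prob_algebra)
    then show ?thesis
      using fb by (intro prob_integrable_bound[where K=K and C=C]) auto
  qed
  have mI: "(\<lambda>x. integral\<^sup>L (N x) f) \<in> borel_measurable M"
    by (rule measurable_compose[OF Ns integral_measurable_subprob_algebra[OF fm]])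
  have intI: "integrable M (\<lambda>x. integral\<^sup>L (N x) f)"
  proof (rule integrable_const_bound[where B=C])
    show "AE x in M. norm (integral\<^sup>L (N x) f) \<le> C"
    proof (rule AE_I2)
      fix x assume x: "x \<in> space M"
      have ps: "prob_space (N x)" and ss: "sets (N x) = sets K" using measurable_space[OF N x] by (auto simp: space_prob_algebra)
      have "norm (integral\<^sup>L (N x) f) \<le> (\<integral>y. norm (f y) \<partial>N x)" by (rule integral_norm_bound)
      also have "\<dots> \<le> (\<integral>y. C \<partial>N x)"
      proof (rule integral_mono)
        show "integrable (N x) (\<lambda>y. norm (f y))" using intK[OF x] by auto
        show "integrable (N x) (\<lambda>y. C)"
          using ps ss by (intro prob_integrable_bound[where K=K and C="\<bar>C\<bar>"]) auto
        show "norm (f y) \<le> C" if "y \<in> space (N x)" for y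
          using fb that sets_eq_imp_space_eq[OF ss] by auto
      qed
      also have "\<dots> = C" using ps by (simp add: prob_space.prob_space)
      finally show "norm (integral\<^sup>L (N x) f) \<le> C" .
    qed
  qed (use mI in auto)
  have "Re (integral\<^sup>L (M \<bind> N) f) = integral\<^sup>L (M \<bind> N) (\<lambda>x. Re (f x))"
    using intB by simp
  also have "\<dots> = \<integral>x. integral\<^sup>L (N x) (\<lambda>x. Re (f x)) \<partial>M"
    by (rule integral_bind[OF _ bRe Ns fin aeB]) auto
  also have "\<dots> = \<integral>x. Re (integral\<^sup>L (N x) f) \<partial>M"
    by (intro Bochner_Integration.integral_cong refl integral_Re intK)
  also have "\<dots> = Re (\<integral>x. integral\<^sup>L (N x) f \<partial>M)" using intI by simp
  finally have 1: "Re (integral\<^sup>L (M \<bind> N) f) = Re (\<integral>x. integral\<^sup>L (N x) f \<partial>M)" .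
  have "Im (integral\<^sup>L (M \<bind> N) f) = integral\<^sup>L (M \<bind> N) (\<lambda>x. Im (f x))"
    using intB by simp
  also have "\<dots> = \<integral>x. integral\<^sup>L (N x) (\<lambda>x. Im (f x)) \<partial>M"
    by (rule integral_bind[OF _ bIm Ns fin aeB]) auto
  also have "\<dots> = \<integral>x. Im (integral\<^sup>L (N x) f) \<partial>M"
    by (intro Bochner_Integration.integral_cong refl integral_Im intK)
  also have "\<dots> = Im (\<integral>x. integral\<^sup>L (N x) f \<partial>M)" using intI by simp
  finally have 2: "Im (integral\<^sup>L (M \<bind> N) f) = Im (\<integral>x. integral\<^sup>L (N x) f \<partial>M)" .
  from 1 2 show ?thesis by (rule complex_eqI)
qed

lemma integral_PiM_prod_pow:
  fixes h :: "'a \<Rightarrow> complex"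
  assumes P: "prob_space M" and hi: "integrable M h"
  shows "(\<integral>x. (\<Prod>i<n. h (x i)) \<partial>PiM (UNIV::nat set) (\<lambda>_. M)) = (integral\<^sup>L M h) ^ n"
proof -
  interpret product_prob_space "\<lambda>_. M" "UNIV :: nat set"
    unfolding product_prob_space_def product_prob_space_axioms_def product_sigma_finite_def
    using P by (auto simp: prob_space_imp_sigma_finite)
  have hm[measurable]: "h \<in> borel_measurable M" using hi by auto
  have "(\<integral>x. (\<Prod>i<n. h (x i)) \<partial>PiM UNIV (\<lambda>_. M)) =
        (\<integral>x. (\<Prod>i<n. h (x i)) \<partial>distr (PiM UNIV (\<lambda>_. M)) (PiM {..<n} (\<lambda>_. M)) (\<lambda>x. restrict x {..<n}))"
    by (subst integral_distr) (auto intro!: integral_cong measurable_restrict_subset)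
  also have "\<dots> = (\<integral>x. (\<Prod>i<n. h (x i)) \<partial>PiM {..<n} (\<lambda>_. M))"
    by (subst distr_PiM_restrict_finite) auto
  also have "\<dots> = (\<Prod>i<n. integral\<^sup>L M h)"
    using hi by (subst product_integral_prod) auto
  finally show ?thesis by simp
qed


locale model =
  fixes lam :: "real \<Rightarrow> real" and B Sd :: "real \<Rightarrow> real measure" and t :: real
  assumes lam_nonneg: "\<And>s. 0 \<le> s \<Longrightarrow> 0 \<le> lam s"
    and lam_meas[measurable]: "lam \<in> borel_measurable borel"
    and lam_int: "\<And>u. 0 \<le> u \<Longrightarrow> set_integrable lborel {0..u} lam"
    and B_kernel[measurable]: "B \<in> borel \<rightarrow>\<^sub>M prob_algebra borel"
    and B_nonneg: "\<And>s. 0 \<le> s \<Longrightarrow> AE b in B s. 0 \<le> b"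
    and Sd_kernel[measurable]: "Sd \<in> borel \<rightarrow>\<^sub>M prob_algebra borel"
    and Sd_nonneg: "\<And>s. 0 \<le> s \<Longrightarrow> AE x in Sd s. 0 \<le> x"
    and Sd_mean: "\<And>s. 0 \<le> s \<Longrightarrow> integrable (Sd s) (\<lambda>x. x)"
    and t: "0 \<le> t"
begin

abbreviation "Lam \<equiv> cum_rate lam t"

lemma ind_lam_int: "integrable lborel (\<lambda>s. indicator {0..t} s * lam s)"
  using lam_int[OF t] by (simp add: set_integrable_def)

lemma ind_lam_nonneg: "0 \<le> indicator {0..t} s * lam s"
  using lam_nonneg[of s] by (auto simp: indicator_def)

lemma Lam_eq: "Lam = (\<integral>s. indicator {0..t} s * lam s \<partial>lborel)"
  by (simp add: cum_rate_def set_lebesgue_integral_def)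

lemma Lam_nonneg: "0 \<le> Lam"
  unfolding Lam_eq by (intro integral_nonneg_AE) (simp add: ind_lam_nonneg)

lemma B_prob: "prob_space (B s)" and B_sets: "sets (B s) = sets borel"
  using measurable_space[OF B_kernel, of s] by (auto simp: space_prob_algebra)

lemma Sd_prob: "prob_space (Sd s)" and Sd_sets: "sets (Sd s) = sets borel"
  using measurable_space[OF Sd_kernel, of s] by (auto simp: space_prob_algebra)

lemma arr_prob: "arrival_time_dist lam t \<in> space (prob_algebra borel)"
proof (cases "Lam = 0")
  case True
  then show ?thesis by (simp add: arrival_time_dist_def space_prob_algebra prob_space_return)
next
  case False
  then have Lp: "0 < Lam" using Lam_nonneg by simp
  let ?D = "density lborel (\<lambda>s. ennreal (indicator {0..t} s * lam s / Lam))"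
  have "emeasure ?D (space ?D) = (\<integral>\<^sup>+s. ennreal (indicator {0..t} s * lam s / Lam) \<partial>lborel)"
    by (simp add: emeasure_density)
  also have "\<dots> = ennreal (\<integral>s. indicator {0..t} s * lam s / Lam \<partial>lborel)"
    using ind_lam_int ind_lam_nonneg Lp
    by (intro nn_integral_eq_integral) (auto intro!: divide_nonneg_pos)
  also have "(\<integral>s. indicator {0..t} s * lam s / Lam \<partial>lborel) = 1"
    using Lp by (simp add: Lam_eq[symmetric])
  finally have "prob_space ?D" by (intro prob_spaceI) simp
  then show ?thesis using False by (simp add: arrival_time_dist_def space_prob_algebra)
qed

lemma arr_prob_space: "prob_space (arrival_time_dist lam t)" and arr_sets: "sets (arrival_time_dist lam t) = sets borel"
  using arr_prob by (auto simp: space_prob_algebra)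

lemma arr_int:
  fixes H :: "real \<Rightarrow> complex"
  assumes Hm[measurable]: "H \<in> borel_measurable borel"
  shows "of_real Lam * (\<integral>s. H s \<partial>arrival_time_dist lam t) = (\<integral>s. of_real (indicator {0..t} s * lam s) * H s \<partial>lborel)"
proof (cases "Lam = 0")
  case True
  have "AE s in lborel. indicator {0..t} s * lam s = 0"
    using ind_lam_int ind_lam_nonneg True
    by (subst integral_nonneg_eq_0_iff_AE[symmetric]) (auto simp: Lam_eq)
  then have "AE s in lborel. of_real (indicator {0..t} s * lam s) * H s = (0::complex)"
    by eventually_elim simp
  then have "(\<integral>s. of_real (indicator {0..t} s * lam s) * H s \<partial>lborel) = 0"
    by (rule integral_eq_zero_AE)
  then show ?thesis using True by simp
next
  case False
  then have Lp: "0 < Lam" using Lam_nonneg by simp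
  have "(\<integral>s. H s \<partial>arrival_time_dist lam t) = (\<integral>s. (indicator {0..t} s * lam s / Lam) *\<^sub>R H s \<partial>lborel)"
    using False unfolding arrival_time_dist_def
    by (simp, subst integral_density) (auto simp: ind_lam_nonneg Lp intro!: divide_nonneg_pos)
  then have "of_real Lam * (\<integral>s. H s \<partial>arrival_time_dist lam t) = (\<integral>s. of_real Lam * ((indicator {0..t} s * lam s / Lam) *\<^sub>R H s) \<partial>lborel)"
    by (simp only: integral_mult_right_zero)
  also have "\<dots> = (\<integral>s. of_real (indicator {0..t} s * lam s) * H s \<partial>lborel)"
    using Lp by (intro Bochner_Integration.integral_cong[OF refl]) (auto simp: scaleR_conv_of_real)
  finally show ?thesis .
qed

definition K :: "real \<Rightarrow> (real \<times> real \<times> (nat \<Rightarrow> real)) measure" where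
  "K s = B s \<bind> (\<lambda>b. distr (PiM UNIV (\<lambda>_. Sd s)) mark_space (\<lambda>S. (s, b, S)))"

lemma PiSd_kernel[measurable]: "(\<lambda>s. PiM (UNIV::nat set) (\<lambda>_. Sd s)) \<in> borel \<rightarrow>\<^sub>M prob_algebra (PiM UNIV (\<lambda>_. borel))"
  by (rule PiM_kernel[OF Sd_kernel])

lemma inner_kernel: "(\<lambda>(s, b). distr (PiM (UNIV::nat set) (\<lambda>_. Sd s)) mark_space (\<lambda>S. (s, b, S))) \<in> borel \<Otimes>\<^sub>M borel \<rightarrow>\<^sub>M prob_algebra mark_space"
proof -
  have "(\<lambda>x. distr (PiM (UNIV::nat set) (\<lambda>_. Sd (fst x))) mark_space (\<lambda>S. (fst x, snd x, S))) \<in> borel \<Otimes>\<^sub>M borel \<rightarrow>\<^sub>M prob_algebra mark_space"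
  proof (rule measurable_distr_prob_space2[where M="PiM (UNIV::nat set) (\<lambda>_. borel)"])
    show "(\<lambda>x. PiM (UNIV::nat set) (\<lambda>_. Sd (fst x))) \<in> borel \<Otimes>\<^sub>M borel \<rightarrow>\<^sub>M prob_algebra (PiM (UNIV::nat set) (\<lambda>_. borel))"
      using measurable_compose[OF measurable_fst PiSd_kernel] by simp
    show "(\<lambda>(x, y). (fst x, snd x, y)) \<in> (borel \<Otimes>\<^sub>M borel) \<Otimes>\<^sub>M PiM (UNIV::nat set) (\<lambda>_. borel) \<rightarrow>\<^sub>M mark_space"
      unfolding mark_space_def by measurable
  qed
  then show ?thesis by (simp add: case_prod_beta')
qed

lemma K_kernel[measurable]: "K \<in> borel \<rightarrow>\<^sub>M prob_algebra mark_space"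
  unfolding K_def
  by (rule measurable_bind_prob_space2[OF B_kernel]) (use inner_kernel in simp)

lemma mark_dist_eq: "mark_dist lam B Sd t = arrival_time_dist lam t \<bind> K"
  by (simp add: mark_dist_def K_def[abs_def])

lemma mark_prob: "prob_space (mark_dist lam B Sd t)" and mark_sets: "sets (mark_dist lam B Sd t) = sets mark_space"
  unfolding mark_dist_eq
  using prob_space_bind'[OF arr_prob K_kernel] sets_bind'[OF arr_prob K_kernel] by auto

lemma mark_int:
  fixes g :: "real \<times> real \<times> (nat \<Rightarrow> real) \<Rightarrow> complex"
  assumes gm[measurable]: "g \<in> borel_measurable mark_space" and gb: "\<And>x. cmod (g x) \<le> 1"
  shows "(\<integral>x. g x \<partial>mark_dist lam B Sd t) =
    (\<integral>s. (\<integral>b. (\<integral>S. g (s, b, S) \<partial>PiM UNIV (\<lambda>_. Sd s)) \<partial>B s) \<partial>arrival_time_dist lam t)"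
proof -
  have "(\<integral>x. g x \<partial>mark_dist lam B Sd t) = (\<integral>s. (\<integral>x. g x \<partial>K s) \<partial>arrival_time_dist lam t)"
    unfolding mark_dist_eq
    by (rule integral_bind_complex[OF gm _ _ arr_prob_space, where C=1]) (use gb arr_sets in \<open>auto cong: measurable_cong_sets\<close>)
  also have "\<dots> = (\<integral>s. (\<integral>b. (\<integral>S. g (s, b, S) \<partial>PiM UNIV (\<lambda>_. Sd s)) \<partial>B s) \<partial>arrival_time_dist lam t)"
  proof (rule Bochner_Integration.integral_cong[OF refl])
    fix s
    have ik: "(\<lambda>b. distr (PiM UNIV (\<lambda>_. Sd s)) mark_space (\<lambda>S. (s, b, S))) \<in> borel \<rightarrow>\<^sub>M prob_algebra mark_space"
      using measurable_Pair2[OF inner_kernel, of s] by simp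
    have "(\<integral>x. g x \<partial>K s) = (\<integral>b. (\<integral>x. g x \<partial>distr (PiM UNIV (\<lambda>_. Sd s)) mark_space (\<lambda>S. (s, b, S))) \<partial>B s)"
      unfolding K_def
      by (rule integral_bind_complex[OF gm _ _ B_prob, where C=1]) (use gb ik B_sets in \<open>auto cong: measurable_cong_sets\<close>)
    also have "\<dots> = (\<integral>b. (\<integral>S. g (s, b, S) \<partial>PiM UNIV (\<lambda>_. Sd s)) \<partial>B s)"
    proof (rule Bochner_Integration.integral_cong[OF refl])
      fix b
      have "(\<lambda>S. (s, b, S)) \<in> PiM UNIV (\<lambda>_. Sd s) \<rightarrow>\<^sub>M mark_space"
      proof -
        have "sets (PiM UNIV (\<lambda>_. Sd s)) = sets (PiM UNIV (\<lambda>_::nat. borel::real measure))"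
          using Sd_sets by (intro sets_PiM_cong) auto
        moreover have "(\<lambda>S. (s, b, S)) \<in> PiM UNIV (\<lambda>_::nat. borel::real measure) \<rightarrow>\<^sub>M mark_space"
          unfolding mark_space_def by measurable
        ultimately show ?thesis by (simp cong: measurable_cong_sets)
      qed
      then show "(\<integral>x. g x \<partial>distr (PiM UNIV (\<lambda>_. Sd s)) mark_space (\<lambda>S. (s, b, S))) = (\<integral>S. g (s, b, S) \<partial>PiM UNIV (\<lambda>_. Sd s))"
        by (rule integral_distr) simp
    qed
    finally show "(\<integral>x. g x \<partial>K s) = (\<integral>b. (\<integral>S. g (s, b, S) \<partial>PiM UNIV (\<lambda>_. Sd s)) \<partial>B s)" .
  qed
  finally show ?thesis .
qed

end


lemma poisson_gen:
  fixes z :: complex and L :: real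
  assumes L: "0 < L" and z: "cmod z \<le> 1"
  shows "(\<integral>n. z ^ n \<partial>measure_pmf (poisson_pmf L)) = exp (of_real L * (z - 1))"
proof -
  have "(\<integral>n. z ^ n \<partial>measure_pmf (poisson_pmf L)) = (\<integral>n. pmf (poisson_pmf L) n *\<^sub>R z ^ n \<partial>count_space UNIV)"
    unfolding measure_pmf_eq_density by (subst integral_density) auto
  also have "\<dots> = (\<integral>n. of_real (exp (- L)) * ((of_real L * z) ^ n /\<^sub>R fact n) \<partial>count_space UNIV)"
    using L by (intro Bochner_Integration.integral_cong refl) (simp add: scaleR_conv_of_real power_mult_distrib field_simps)
  also have "\<dots> = of_real (exp (- L)) * exp (of_real L * z)"
  proof -
    have s: "(\<lambda>n. of_real (exp (- L)) * ((of_real L * z) ^ n /\<^sub>R fact n)) sums (of_real (exp (- L)) * exp (of_real L * z))"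
      by (intro sums_mult exp_converges)
    have "integrable (count_space UNIV) (\<lambda>n::nat. of_real (exp (- L)) * ((of_real L * z) ^ n /\<^sub>R fact n))"
    proof (subst integrable_count_space_nat_iff)
      show "summable (\<lambda>n. norm (of_real (exp (- L)) * ((of_real L * z) ^ n /\<^sub>R fact n)))"
        unfolding norm_mult by (intro summable_mult summable_norm_exp)
    qed
    then show ?thesis using s sums_unique integral_count_space_nat by metis
  qed
  also have "\<dots> = exp (of_real L * (z - 1))"
    by (simp add: exp_of_real[symmetric] exp_add[symmetric] algebra_simps)
  finally show ?thesis .
qed

context model begin

abbreviation "MD \<equiv> mark_dist lam B Sd t"
abbreviation "PMD \<equiv> PiM (UNIV::nat set) (\<lambda>_. MD)"
abbreviation "Nd \<equiv> num_arrivals lam t"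

lemma PMD_prob: "prob_space PMD"
  using mark_prob by (intro prob_space_PiM) auto

lemma QS_eq: "queue_sample lam B Sd t = measure_pmf Nd \<Otimes>\<^sub>M PMD"
  by (simp add: queue_sample_def)

lemma QS_pair: "pair_prob_space (measure_pmf Nd) PMD"
  using PMD_prob by (simp add: pair_prob_space_def pair_sigma_finite_def prob_space_imp_sigma_finite prob_space_measure_pmf)

lemma QS_prob: "prob_space (queue_sample lam B Sd t)"
proof -
  interpret pair_prob_space "measure_pmf Nd" PMD by (rule QS_pair)
  show ?thesis unfolding QS_eq by (rule prob_space_axioms)
qed

lemma comp_meas:
  assumes gm: "g \<in> borel_measurable mark_space"
  shows "(\<lambda>x. g (x i)) \<in> borel_measurable PMD"
proof -
  have "g \<in> borel_measurable MD" using gm by (simp cong: measurable_cong_sets[OF mark_sets refl])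
  from measurable_compose[OF measurable_component_singleton[of i UNIV "\<lambda>_. MD"] this] show ?thesis by simp
qed

lemma F_meas:
  fixes g :: "_ \<Rightarrow> 'b::{real_normed_field,second_countable_topology}"
  assumes gm: "g \<in> borel_measurable mark_space"
  shows "(\<lambda>\<omega>. \<Prod>i<fst \<omega>. g (snd \<omega> i)) \<in> borel_measurable (queue_sample lam B Sd t)"
  unfolding QS_eq
proof (rule measurable_compose_countable'[where I=UNIV and g=fst])
  fix n :: nat
  show "(\<lambda>\<omega>. \<Prod>i<n. g (snd \<omega> i)) \<in> borel_measurable (measure_pmf Nd \<Otimes>\<^sub>M PMD)"
    by (intro borel_measurable_prod measurable_compose[OF measurable_snd comp_meas[OF gm]])
  show "fst \<in> measure_pmf Nd \<Otimes>\<^sub>M PMD \<rightarrow>\<^sub>M count_space UNIV"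
    using measurable_fst[of "measure_pmf Nd" PMD] by simp
qed auto

lemma F_sum_meas:
  fixes g :: "_ \<Rightarrow> real"
  assumes gm: "g \<in> borel_measurable mark_space"
  shows "(\<lambda>\<omega>. \<Sum>i<fst \<omega>. g (snd \<omega> i)) \<in> borel_measurable (queue_sample lam B Sd t)"
  unfolding QS_eq
proof (rule measurable_compose_countable'[where I=UNIV and g=fst])
  fix n :: nat
  show "(\<lambda>\<omega>. \<Sum>i<n. g (snd \<omega> i)) \<in> borel_measurable (measure_pmf Nd \<Otimes>\<^sub>M PMD)"
    by (intro borel_measurable_sum measurable_compose[OF measurable_snd comp_meas[OF gm]])
  show "fst \<in> measure_pmf Nd \<Otimes>\<^sub>M PMD \<rightarrow>\<^sub>M count_space UNIV"
    using measurable_fst[of "measure_pmf Nd" PMD] by simp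
qed auto

lemma CP:
  fixes g :: "real \<times> real \<times> (nat \<Rightarrow> real) \<Rightarrow> complex"
  assumes gm[measurable]: "g \<in> borel_measurable mark_space" and gb: "\<And>x. cmod (g x) \<le> 1"
  shows "(\<integral>\<omega>. (\<Prod>i<fst \<omega>. g (snd \<omega> i)) \<partial>queue_sample lam B Sd t) = exp (of_real Lam * ((\<integral>x. g x \<partial>MD) - 1))"
proof -
  interpret pair_prob_space "measure_pmf Nd" PMD by (rule QS_pair)
  have gi: "integrable MD g"
    using gb by (intro prob_integrable_bound[OF mark_prob mark_sets gm]) auto
  let ?z = "\<integral>x. g x \<partial>MD"
  have z1: "cmod ?z \<le> 1"
  proof -
    interpret M: prob_space MD by (rule mark_prob)
    have "cmod ?z \<le> (\<integral>x. cmod (g x) \<partial>MD)" by (rule integral_norm_bound)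
    also have "\<dots> \<le> (\<integral>x. 1 \<partial>MD)"
      using gi gb by (intro integral_mono) auto
    finally show ?thesis by (simp add: M.prob_space)
  qed
  have pb: "cmod (\<Prod>i<n. g (x i)) \<le> 1" for n x
    by (simp only: prod_norm[symmetric]) (intro prod_le_1 conjI norm_ge_zero gb)
  have Fi: "integrable (measure_pmf Nd \<Otimes>\<^sub>M PMD) (\<lambda>\<omega>. \<Prod>i<fst \<omega>. g (snd \<omega> i))"
    using F_meas[OF gm] QS_prob
    by (intro prob_integrable_bound[where K="measure_pmf Nd \<Otimes>\<^sub>M PMD" and C=1])
       (auto simp: QS_eq pb)
  have "(\<integral>\<omega>. (\<Prod>i<fst \<omega>. g (snd \<omega> i)) \<partial>queue_sample lam B Sd t) =
        (\<integral>n. (\<integral>x. (\<Prod>i<n. g (x i)) \<partial>PMD) \<partial>measure_pmf Nd)"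
    unfolding QS_eq using integral_fst'[OF Fi] by simp
  also have "\<dots> = (\<integral>n. ?z ^ n \<partial>measure_pmf Nd)"
    by (intro Bochner_Integration.integral_cong refl integral_PiM_prod_pow[OF mark_prob gi])
  also have "\<dots> = exp (of_real Lam * (?z - 1))"
  proof (cases "Lam = 0")
    case True then show ?thesis by (simp add: num_arrivals_def)
  next
    case False
    then have "0 < Lam" using Lam_nonneg by simp
    then show ?thesis using False poisson_gen[OF _ z1] by (simp add: num_arrivals_def)
  qed
  finally show ?thesis .
qed

end


lemma batch_size_meas[measurable]: "(\<lambda>b. batch_size m b) \<in> borel \<rightarrow>\<^sub>M count_space UNIV"
proof -
  have "(\<lambda>b. \<lceil>real m * b\<rceil>) \<in> borel \<rightarrow>\<^sub>M count_space UNIV"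
    by (rule measurable_compose[OF _ measurable_real_ceiling]) simp
  then have "(\<lambda>b. nat \<lceil>real m * b\<rceil>) \<in> borel \<rightarrow>\<^sub>M count_space UNIV"
    by (rule measurable_compose) simp
  then show ?thesis by (simp add: batch_size_def[abs_def])
qed

definition Gf :: "(real \<Rightarrow> real \<Rightarrow> real) \<Rightarrow> complex \<Rightarrow> nat \<Rightarrow> real \<times> real \<times> (nat \<Rightarrow> real) \<Rightarrow> complex" where
  "Gf f z m = (\<lambda>(s, b, S). \<Prod>j<batch_size m b. exp (z * of_real (f s (S j)) / of_nat m))"

lemma Gf_meas:
  assumes fm: "(\<lambda>(s, x). f s x) \<in> borel_measurable (borel \<Otimes>\<^sub>M borel)"
  shows "Gf f z m \<in> borel_measurable mark_space"
proof -
  have "(\<lambda>x. (\<lambda>n x. \<Prod>j<n. exp (z * of_real (f (fst x) (snd (snd x) j)) / of_nat m)) (batch_size m (fst (snd x))) x) \<in> borel_measurable mark_space"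
  proof (rule measurable_compose_countable'[where I=UNIV and g="\<lambda>x. batch_size m (fst (snd x))" and f="\<lambda>n x. \<Prod>j<n. exp (z * of_real (f (fst x) (snd (snd x) j)) / of_nat m)"])
    fix n :: nat
    have "(\<lambda>x. f (fst x) (snd (snd x) j)) \<in> borel_measurable mark_space" for j
    proof -
      have "(\<lambda>x::real \<times> real \<times> (nat \<Rightarrow> real). (fst x, snd (snd x) j)) \<in> mark_space \<rightarrow>\<^sub>M borel \<Otimes>\<^sub>M borel"
        unfolding mark_space_def by measurable
      from measurable_compose[OF this fm] show ?thesis by simp
    qed
    then show "(\<lambda>x. \<Prod>j<n. exp (z * of_real (f (fst x) (snd (snd x) j)) / of_nat m)) \<in> borel_measurable mark_space"
      by measurable
    show "(\<lambda>x. batch_size m (fst (snd x))) \<in> mark_space \<rightarrow>\<^sub>M count_space UNIV"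
      unfolding mark_space_def by measurable
  qed auto
  moreover have "Gf f z m = (\<lambda>x. (\<lambda>n x. \<Prod>j<n. exp (z * of_real (f (fst x) (snd (snd x) j)) / of_nat m)) (batch_size m (fst (snd x))) x)"
    by (auto simp: Gf_def)
  ultimately show ?thesis by simp
qed

lemma exp_bound1:
  assumes "Re z \<le> 0" "0 \<le> y"
  shows "cmod (exp (z * of_real y / of_nat m)) \<le> 1"
proof -
  have "Re (z * of_real y / of_nat m) = Re z * y / real m" by (simp add: Re_divide_of_nat)
  also have "\<dots> \<le> 0" using assms by (simp add: divide_nonpos_nonneg mult_nonpos_nonneg)
  finally show ?thesis by simp
qed

lemma Gf_bound:
  assumes "Re z \<le> 0" "\<And>s x. 0 \<le> f s x"
  shows "cmod (Gf f z m x) \<le> 1"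
proof -
  obtain s b S where x: "x = (s, b, S)" by (cases x) auto
  show ?thesis unfolding x Gf_def
    by (simp only: case_prod_conv prod_norm[symmetric]) (intro prod_le_1 conjI norm_ge_zero exp_bound1 assms)
qed

context model begin

lemma K_int:
  fixes g :: "real \<times> real \<times> (nat \<Rightarrow> real) \<Rightarrow> complex"
  assumes gm[measurable]: "g \<in> borel_measurable mark_space" and gb: "\<And>x. cmod (g x) \<le> 1"
  shows "(\<integral>x. g x \<partial>K s) = (\<integral>b. (\<integral>S. g (s, b, S) \<partial>PiM UNIV (\<lambda>_. Sd s)) \<partial>B s)"
proof -
  have ik: "(\<lambda>b. distr (PiM UNIV (\<lambda>_. Sd s)) mark_space (\<lambda>S. (s, b, S))) \<in> borel \<rightarrow>\<^sub>M prob_algebra mark_space"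
    using measurable_Pair2[OF inner_kernel, of s] by simp
  have "(\<integral>x. g x \<partial>K s) = (\<integral>b. (\<integral>x. g x \<partial>distr (PiM UNIV (\<lambda>_. Sd s)) mark_space (\<lambda>S. (s, b, S))) \<partial>B s)"
    unfolding K_def
    by (rule integral_bind_complex[OF gm _ _ B_prob, where C=1]) (use gb ik B_sets in \<open>auto cong: measurable_cong_sets\<close>)
  also have "\<dots> = (\<integral>b. (\<integral>S. g (s, b, S) \<partial>PiM UNIV (\<lambda>_. Sd s)) \<partial>B s)"
  proof (rule Bochner_Integration.integral_cong[OF refl])
    fix b
    have "(\<lambda>S. (s, b, S)) \<in> PiM UNIV (\<lambda>_. Sd s) \<rightarrow>\<^sub>M mark_space"
    proof -
      have "sets (PiM UNIV (\<lambda>_. Sd s)) = sets (PiM UNIV (\<lambda>_::nat. borel::real measure))"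
        using Sd_sets by (intro sets_PiM_cong) auto
      moreover have "(\<lambda>S. (s, b, S)) \<in> PiM UNIV (\<lambda>_::nat. borel::real measure) \<rightarrow>\<^sub>M mark_space"
        unfolding mark_space_def by measurable
      ultimately show ?thesis by (simp cong: measurable_cong_sets)
    qed
    then show "(\<integral>x. g x \<partial>distr (PiM UNIV (\<lambda>_. Sd s)) mark_space (\<lambda>S. (s, b, S))) = (\<integral>S. g (s, b, S) \<partial>PiM UNIV (\<lambda>_. Sd s))"
      by (rule integral_distr) simp
  qed
  finally show ?thesis .
qed

lemma mark_int':
  fixes g :: "real \<times> real \<times> (nat \<Rightarrow> real) \<Rightarrow> complex"
  assumes gm[measurable]: "g \<in> borel_measurable mark_space" and gb: "\<And>x. cmod (g x) \<le> 1"
  shows "(\<integral>x. g x \<partial>MD) = (\<integral>s. (\<integral>x. g x \<partial>K s) \<partial>arrival_time_dist lam t)"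
  unfolding mark_dist_eq
  by (rule integral_bind_complex[OF gm _ _ arr_prob_space, where C=1]) (use gb arr_sets in \<open>auto cong: measurable_cong_sets\<close>)

lemma Kg_meas:
  fixes g :: "real \<times> real \<times> (nat \<Rightarrow> real) \<Rightarrow> complex"
  assumes gm[measurable]: "g \<in> borel_measurable mark_space"
  shows "(\<lambda>s. \<integral>x. g x \<partial>K s) \<in> borel_measurable borel"
  by (rule measurable_compose[OF measurable_prob_algebraD[OF K_kernel] integral_measurable_subprob_algebra[OF gm]])

lemma Lam_MD:
  fixes g :: "real \<times> real \<times> (nat \<Rightarrow> real) \<Rightarrow> complex"
  assumes gm[measurable]: "g \<in> borel_measurable mark_space" and gb: "\<And>x. cmod (g x) \<le> 1"
  shows "of_real Lam * ((\<integral>x. g x \<partial>MD) - 1) = (\<integral>s. of_real (indicator {0..t} s * lam s) * ((\<integral>x. g x \<partial>K s) - 1) \<partial>lborel)"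
proof -
  have m: "(\<lambda>s. (\<integral>x. g x \<partial>K s) - 1) \<in> borel_measurable borel" using Kg_meas[OF gm] by measurable
  have "(\<integral>x. g x \<partial>MD) - 1 = (\<integral>s. (\<integral>x. g x \<partial>K s) - 1 \<partial>arrival_time_dist lam t)"
  proof -
    interpret A: prob_space "arrival_time_dist lam t" by (rule arr_prob_space)
    have "integrable (arrival_time_dist lam t) (\<lambda>s. \<integral>x. g x \<partial>K s)"
    proof (rule prob_integrable_bound[OF arr_prob_space arr_sets Kg_meas[OF gm], where C=1])
      fix s
      interpret Ks: prob_space "K s" using measurable_space[OF K_kernel, of s] by (simp add: space_prob_algebra)
      have ss: "sets (K s) = sets mark_space" using measurable_space[OF K_kernel, of s] by (simp add: space_prob_algebra)
      have "cmod (\<integral>x. g x \<partial>K s) \<le> (\<integral>x. cmod (g x) \<partial>K s)" by (rule integral_norm_bound)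
      also have "\<dots> \<le> (\<integral>x. 1 \<partial>K s)"
        using gb by (intro integral_mono prob_integrable_bound[OF Ks.prob_space_axioms ss, where C=1]) (auto simp: gm)
      finally show "norm (\<integral>x. g x \<partial>K s) \<le> 1" by (simp add: Ks.prob_space)
    qed
    then show ?thesis using mark_int'[OF gm gb] by (simp add: A.prob_space)
  qed
  then show ?thesis using arr_int[OF m] by simp
qed

lemma Gf_K:
  assumes fm: "(\<lambda>(s, x). f s x) \<in> borel_measurable (borel \<Otimes>\<^sub>M borel)"
    and Rez: "Re z \<le> 0" and fnn: "\<And>s x. 0 \<le> f s x"
  shows "(\<integral>x. Gf f z m x \<partial>K s) = (\<integral>b. (\<integral>x. exp (z * of_real (f s x) / of_nat m) \<partial>Sd s) ^ batch_size m b \<partial>B s)"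
proof -
  have "(\<integral>x. Gf f z m x \<partial>K s) = (\<integral>b. (\<integral>S. Gf f z m (s, b, S) \<partial>PiM UNIV (\<lambda>_. Sd s)) \<partial>B s)"
    by (rule K_int[OF Gf_meas[OF fm] Gf_bound[OF Rez fnn]])
  also have "\<dots> = (\<integral>b. (\<integral>x. exp (z * of_real (f s x) / of_nat m) \<partial>Sd s) ^ batch_size m b \<partial>B s)"
  proof (rule Bochner_Integration.integral_cong[OF refl])
    fix b
    have fsm: "(\<lambda>x. f s x) \<in> borel_measurable borel"
      using measurable_Pair2[OF fm, of s] by simp
    have int: "integrable (Sd s) (\<lambda>x. exp (z * of_real (f s x) / of_nat m))"
      by (rule prob_integrable_bound[OF Sd_prob Sd_sets, where C=1]) (use fsm exp_bound1[OF Rez fnn] in auto)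
    show "(\<integral>S. Gf f z m (s, b, S) \<partial>PiM UNIV (\<lambda>_. Sd s)) = (\<integral>x. exp (z * of_real (f s x) / of_nat m) \<partial>Sd s) ^ batch_size m b"
      unfolding Gf_def using integral_PiM_prod_pow[OF Sd_prob int, of "batch_size m b"] by simp
  qed
  finally show ?thesis .
qed

end


lemma prob_norm_int_le1:
  fixes g :: "_ \<Rightarrow> 'b::{banach,second_countable_topology}"
  assumes P: "prob_space N" and ss: "sets N = sets K" and gm: "g \<in> borel_measurable K" and gb: "\<And>x. norm (g x) \<le> 1"
  shows "norm (integral\<^sup>L N g) \<le> 1"
proof -
  interpret prob_space N by fact
  have gm': "g \<in> borel_measurable N" using gm by (simp cong: measurable_cong_sets[OF ss refl])
  have int: "integrable N g" by (rule prob_integrable_bound[OF P ss gm gb])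
  have "norm (integral\<^sup>L N g) \<le> (\<integral>x. norm (g x) \<partial>N)" by (rule integral_norm_bound)
  also have "\<dots> \<le> (\<integral>x. 1 \<partial>N)"
  proof (rule integral_mono)
    show "integrable N (\<lambda>x. norm (g x))" using int by auto
    show "integrable N (\<lambda>x. 1::real)" by simp
  qed (use gb in auto)
  finally show ?thesis by (simp add: prob_space)
qed

context model begin

lemma phi_bound:
  assumes fsm: "(\<lambda>x. f s x) \<in> borel_measurable borel" and Rez: "Re z \<le> 0" and fnn: "\<And>s x. 0 \<le> f s x"
  shows "cmod (\<integral>x. exp (z * of_real (f s x) / of_nat m) \<partial>Sd s) \<le> 1"
  by (rule prob_norm_int_le1[OF Sd_prob Sd_sets, where g="\<lambda>x. exp (z * of_real (f s x) / of_nat m)"])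
     (use fsm exp_bound1[OF Rez fnn] in auto)

lemma inner_lim:
  assumes fm: "(\<lambda>(s, x). f s x) \<in> borel_measurable (borel \<Otimes>\<^sub>M borel)"
    and Rez: "Re z \<le> 0" and fnn: "\<And>s x. 0 \<le> f s x"
    and H: "\<And>y. 0 \<le> y \<Longrightarrow> cmod (exp (z * of_real y) - 1) \<le> cmod z * y"
    and s: "0 \<le> s" and fi: "integrable (Sd s) (f s)"
  shows "(\<lambda>m. \<integral>x. Gf f z m x \<partial>K s) \<longlonglongrightarrow> (\<integral>b. exp (of_real b * (z * of_real (\<integral>x. f s x \<partial>Sd s))) \<partial>B s)"
proof -
  interpret Bs: prob_space "B s" by (rule B_prob)
  have fsm: "(\<lambda>x. f s x) \<in> borel_measurable borel"
    using measurable_Pair2[OF fm, of s] by simp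
  have fsm': "f s \<in> borel_measurable (Sd s)"
    using fsm by (simp cong: measurable_cong_sets[OF Sd_sets refl])
  have "(\<lambda>m. \<integral>b. (\<integral>x. exp (z * of_real (f s x) / of_nat m) \<partial>Sd s) ^ batch_size m b \<partial>B s)
        \<longlonglongrightarrow> (\<integral>b. exp (of_real b * (z * of_real (\<integral>x. f s x \<partial>Sd s))) \<partial>B s)"
  proof (rule integral_dominated_convergence[where w="\<lambda>_. 1"])
    show "(\<lambda>b. exp (of_real b * (z * of_real (\<integral>x. f s x \<partial>Sd s)))) \<in> borel_measurable (B s)"
      by (simp cong: measurable_cong_sets[OF B_sets refl])
    show "(\<lambda>b. (\<integral>x. exp (z * of_real (f s x) / of_nat m) \<partial>Sd s) ^ batch_size m b) \<in> borel_measurable (B s)" for m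
      by (simp cong: measurable_cong_sets[OF B_sets refl])
    show "integrable (B s) (\<lambda>_. 1::real)" by simp
    show "AE b in B s. (\<lambda>m. (\<integral>x. exp (z * of_real (f s x) / of_nat m) \<partial>Sd s) ^ batch_size m b)
            \<longlonglongrightarrow> exp (of_real b * (z * of_real (\<integral>x. f s x \<partial>Sd s)))"
      using B_nonneg[OF s]
    proof eventually_elim
      case (elim b)
      show ?case
        unfolding batch_size_def
        by (rule pow_lim[OF Sd_prob fsm' fi AE_I2[OF fnn] Rez H elim])
    qed
    show "AE b in B s. norm ((\<integral>x. exp (z * of_real (f s x) / of_nat m) \<partial>Sd s) ^ batch_size m b) \<le> 1" for m
      by (intro AE_I2) (simp add: norm_power power_le_one phi_bound[where f=f and s=s, OF fsm Rez fnn])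
  qed
  moreover have "(\<integral>x. Gf f z m x \<partial>K s) = (\<integral>b. (\<integral>x. exp (z * of_real (f s x) / of_nat m) \<partial>Sd s) ^ batch_size m b \<partial>B s)" for m
    by (rule Gf_K[OF fm Rez fnn])
  ultimately show ?thesis by simp
qed

definition limF :: "(real \<Rightarrow> real \<Rightarrow> real) \<Rightarrow> complex \<Rightarrow> real \<Rightarrow> complex" where
  "limF f z s = of_real (indicator {0..t} s * lam s) * ((\<integral>b. exp (of_real b * (z * of_real (\<integral>x. f s x \<partial>Sd s))) \<partial>B s) - 1)"

lemma QS_lim:
  assumes fm: "(\<lambda>(s, x). f s x) \<in> borel_measurable (borel \<Otimes>\<^sub>M borel)"
    and Rez: "Re z \<le> 0" and fnn: "\<And>s x. 0 \<le> f s x"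
    and H: "\<And>y. 0 \<le> y \<Longrightarrow> cmod (exp (z * of_real y) - 1) \<le> cmod z * y"
    and fi: "\<And>s. 0 \<le> s \<Longrightarrow> integrable (Sd s) (f s)"
  shows "(\<lambda>m. \<integral>\<omega>. (\<Prod>i<fst \<omega>. Gf f z m (snd \<omega> i)) \<partial>queue_sample lam B Sd t)
           \<longlonglongrightarrow> exp (\<integral>s. limF f z s \<partial>lborel)"
proof -
  define seq where "seq m s = of_real (indicator {0..t} s * lam s) * ((\<integral>x. Gf f z m x \<partial>K s) - 1)" for m s
  have gm: "Gf f z m \<in> borel_measurable mark_space" for m by (rule Gf_meas[OF fm])
  have gb: "cmod (Gf f z m x) \<le> 1" for m x by (rule Gf_bound[OF Rez fnn])
  have seqm: "seq m \<in> borel_measurable borel" for m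
    unfolding seq_def using Kg_meas[OF gm] by measurable
  have pw: "(\<lambda>m. seq m s) \<longlonglongrightarrow> limF f z s" for s
  proof (cases "s \<in> {0..t}")
    case True
    then show ?thesis unfolding seq_def limF_def
      by (intro tendsto_mult tendsto_const tendsto_diff inner_lim[OF fm Rez fnn H _ fi]) auto
  next
    case False
    then show ?thesis by (simp add: seq_def limF_def)
  qed
  have Kb: "cmod (\<integral>x. Gf f z m x \<partial>K s) \<le> 1" for m s
    using measurable_space[OF K_kernel, of s]
    by (intro prob_norm_int_le1[OF _ _ gm gb]) (auto simp: space_prob_algebra)
  have "(\<lambda>m. \<integral>s. seq m s \<partial>lborel) \<longlonglongrightarrow> (\<integral>s. limF f z s \<partial>lborel)"
  proof (rule integral_dominated_convergence[where w="\<lambda>s. 2 * (indicator {0..t} s * lam s)"])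
    show "limF f z \<in> borel_measurable lborel"
      using borel_measurable_LIMSEQ_metric[OF seqm pw] by simp
    show "seq m \<in> borel_measurable lborel" for m using seqm by simp
    show "integrable lborel (\<lambda>s. 2 * (indicator {0..t} s * lam s))" using ind_lam_int by simp
    show "AE s in lborel. (\<lambda>m. seq m s) \<longlonglongrightarrow> limF f z s" using pw by simp
    show "AE s in lborel. norm (seq m s) \<le> 2 * (indicator {0..t} s * lam s)" for m
    proof (rule AE_I2)
      fix s
      have "cmod ((\<integral>x. Gf f z m x \<partial>K s) - 1) \<le> 2"
        using norm_triangle_ineq4[of "\<integral>x. Gf f z m x \<partial>K s" 1] Kb[where m=m and s=s] by simp
      moreover have "norm (seq m s) = (indicator {0..t} s * lam s) * cmod ((\<integral>x. Gf f z m x \<partial>K s) - 1)"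
        unfolding seq_def norm_mult norm_of_real using ind_lam_nonneg[of s] by simp
      ultimately show "norm (seq m s) \<le> 2 * (indicator {0..t} s * lam s)"
        using ind_lam_nonneg[of s] mult_left_mono[of "cmod ((\<integral>x. Gf f z m x \<partial>K s) - 1)" 2 "indicator {0..t} s * lam s"]
        by (simp add: mult.commute)
    qed
  qed
  moreover have "(\<integral>\<omega>. (\<Prod>i<fst \<omega>. Gf f z m (snd \<omega> i)) \<partial>queue_sample lam B Sd t) = exp (\<integral>s. seq m s \<partial>lborel)" for m
    using CP[OF gm gb] Lam_MD[OF gm gb] by (simp add: seq_def)
  ultimately show ?thesis by (simp add: tendsto_exp)
qed

end


lemma cdf_mono': "prob_space M \<Longrightarrow> sets M = sets borel \<Longrightarrow> mono (cdf M)"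
proof (rule monoI)
  fix x y :: real assume P: "prob_space M" and ss: "sets M = sets borel" and "x \<le> y"
  interpret prob_space M by fact
  show "cdf M x \<le> cdf M y"
    unfolding cdf_def2 using \<open>x \<le> y\<close> ss by (intro finite_measure_mono) auto
qed

lemma tail_formula:
  fixes M :: "real measure"
  assumes P: "prob_space M" and ss: "sets M = sets borel" and nn: "AE x in M. 0 \<le> x"
    and int: "integrable M (\<lambda>x. x)" and u: "0 \<le> u"
  shows "(\<integral>x. max 0 (x - u) \<partial>M) = (LINT v:{u..}|lborel. 1 - cdf M v)"
proof -
  interpret prob_space M by fact
  interpret pair_sigma_finite M lborel
    by (simp add: pair_sigma_finite_def prob_space_imp_sigma_finite[OF P] lborel.sigma_finite_measure_axioms)
  have cdfm: "cdf M \<in> borel_measurable borel"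
    by (rule borel_measurable_mono[OF cdf_mono'[OF P ss]])
  define g where "g v = indicator {u..} v * (1 - cdf M v)" for v
  have "(\<lambda>v. 1 - cdf M v) \<in> borel_measurable borel" using cdfm by measurable
  then have gm: "g \<in> borel_measurable lborel" unfolding g_def by simp
  have gnn: "0 \<le> g v" for v
  proof -
    have "cdf M v \<le> 1" unfolding cdf_def2 by (rule prob_le_1)
    then show ?thesis by (simp add: g_def indicator_def)
  qed
  have step1: "(\<integral>\<^sup>+x. ennreal (max 0 (x - u)) \<partial>M) = (\<integral>\<^sup>+x. (\<integral>\<^sup>+v. indicator {u..<x} v \<partial>lborel) \<partial>M)"
  proof (rule nn_integral_cong)
    fix x :: real
    show "ennreal (max 0 (x - u)) = (\<integral>\<^sup>+v. indicator {u..<x} v \<partial>lborel)"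
    proof (cases "u \<le> x")
      case True then show ?thesis by (simp add: max_def)
    next
      case False then show ?thesis by (simp add: max_def)
    qed
  qed
  have pss: "sets (M \<Otimes>\<^sub>M lborel) = sets (borel \<Otimes>\<^sub>M (borel::real measure))"
    by (rule sets_pair_measure_cong) (simp_all add: ss)
  have jm0: "(\<lambda>p::real \<times> real. indicator {p. u \<le> snd p \<and> snd p < fst p} p :: ennreal) \<in> borel_measurable (borel \<Otimes>\<^sub>M borel)"
  proof (rule borel_measurable_indicator)
    have "{p \<in> space (borel \<Otimes>\<^sub>M borel). u \<le> snd p \<and> snd p < fst p} \<in> sets (borel \<Otimes>\<^sub>M (borel::real measure))"
      by measurable
    then show "{p::real \<times> real. u \<le> snd p \<and> snd p < fst p} \<in> sets (borel \<Otimes>\<^sub>M borel)"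
      by (simp add: space_pair_measure)
  qed
  have jm: "(\<lambda>(x, v). indicator {u..<x} v :: ennreal) \<in> borel_measurable (M \<Otimes>\<^sub>M lborel)"
  proof -
    have "(\<lambda>(x, v). indicator {u..<x} v :: ennreal) = (\<lambda>p::real \<times> real. indicator {p. u \<le> snd p \<and> snd p < fst p} p)"
      by (auto simp: indicator_def fun_eq_iff)
    then show ?thesis using jm0 by (simp cong: measurable_cong_sets[OF pss refl])
  qed
  have step2: "(\<integral>\<^sup>+x. (\<integral>\<^sup>+v. indicator {u..<x} v \<partial>lborel) \<partial>M) = (\<integral>\<^sup>+v. (\<integral>\<^sup>+x. indicator {u..<x} v \<partial>M) \<partial>lborel)"
    using Fubini'[OF jm] by simp
  have step3: "(\<integral>\<^sup>+x. indicator {u..<x} v \<partial>M) = ennreal (g v)" for v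
  proof -
    have "(\<integral>\<^sup>+x. indicator {u..<x} v \<partial>M) = (\<integral>\<^sup>+x. indicator {u..} v * indicator {v<..} x \<partial>M)"
      by (intro nn_integral_cong) (auto simp: indicator_def)
    also have "\<dots> = indicator {u..} v * emeasure M {v<..}"
      using ss by (subst nn_integral_cmult_indicator) auto
    also have "emeasure M {v<..} = ennreal (1 - cdf M v)"
    proof -
      have "{v<..} = space M - {..v}" using sets_eq_imp_space_eq[OF ss] by auto
      then have "measure M {v<..} = 1 - measure M {..v}"
        using ss by (simp add: prob_compl)
      then show ?thesis by (simp add: emeasure_eq_measure cdf_def2)
    qed
    finally show ?thesis by (simp add: g_def indicator_def)
  qed
  have eqnn: "(\<integral>\<^sup>+x. ennreal (max 0 (x - u)) \<partial>M) = (\<integral>\<^sup>+v. ennreal (g v) \<partial>lborel)"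
    using step1 step2 step3 by simp
  have mmax: "(\<lambda>x. max 0 (x - u)) \<in> borel_measurable M"
    by (simp cong: measurable_cong_sets[OF ss refl])
  have intmax: "integrable M (\<lambda>x. max 0 (x - u))"
  proof (rule Bochner_Integration.integrable_bound[OF integrable_abs[OF int]])
    show "AE x in M. norm (max 0 (x - u)) \<le> norm \<bar>x\<bar>" using u by (auto simp: max_def)
    show "(\<lambda>x. max 0 (x - u)) \<in> borel_measurable M"
      by (simp cong: measurable_cong_sets[OF ss refl])
  qed
  have fin: "(\<integral>\<^sup>+v. ennreal (g v) \<partial>lborel) < \<infinity>"
  proof -
    have "(\<integral>\<^sup>+x. ennreal (max 0 (x - u)) \<partial>M) < \<infinity>"
      using intmax by (simp add: integrable_iff_bounded)
    then show ?thesis using eqnn by simp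
  qed
  have "(\<integral>x. max 0 (x - u) \<partial>M) = enn2real (\<integral>\<^sup>+x. ennreal (max 0 (x - u)) \<partial>M)"
    by (rule integral_eq_nn_integral) (use mmax in auto)
  also have "\<dots> = enn2real (\<integral>\<^sup>+v. ennreal (g v) \<partial>lborel)" using eqnn by simp
  also have "\<dots> = (\<integral>v. g v \<partial>lborel)"
    by (rule integral_eq_nn_integral[symmetric]) (use gm gnn in auto)
  also have "\<dots> = (LINT v:{u..}|lborel. 1 - cdf M v)"
    by (simp add: set_lebesgue_integral_def g_def)
  finally show ?thesis .
qed


lemma card_sum: fixes n :: nat shows "real (card {j. j < n \<and> P j}) = (\<Sum>j<n. if P j then 1 else 0)"
proof -
  have "{j. j < n \<and> P j} = {j \<in> {..<n}. P j}" by auto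
  then have "real (card {j. j < n \<and> P j}) = (\<Sum>j\<in>{j \<in> {..<n}. P j}. 1)" by simp
  also have "\<dots> = (\<Sum>j<n. if P j then 1 else 0)" by (rule sum.inter_filter) simp
  finally show ?thesis .
qed

context model begin

lemma limF_meas:
  fixes f :: "real \<Rightarrow> real \<Rightarrow> real"
  assumes fm: "(\<lambda>(s, x). f s x) \<in> borel_measurable (borel \<Otimes>\<^sub>M borel)"
    and Rez: "Re z \<le> 0" and fnn: "\<And>s x. 0 \<le> f s x"
    and H: "\<And>y. 0 \<le> y \<Longrightarrow> cmod (exp (z * of_real y) - 1) \<le> cmod z * y"
    and fi: "\<And>s. 0 \<le> s \<Longrightarrow> integrable (Sd s) (f s)"
  shows "limF f z \<in> borel_measurable borel"
proof -
  define seq where "seq m s = of_real (indicator {0..t} s * lam s) * ((\<integral>x. Gf f z m x \<partial>K s) - 1)" for m s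
  have gm: "Gf f z m \<in> borel_measurable mark_space" for m by (rule Gf_meas[OF fm])
  have seqm: "seq m \<in> borel_measurable borel" for m
    unfolding seq_def using Kg_meas[OF gm] by measurable
  have pw: "(\<lambda>m. seq m s) \<longlonglongrightarrow> limF f z s" for s
  proof (cases "s \<in> {0..t}")
    case True
    then show ?thesis unfolding seq_def limF_def
      by (intro tendsto_mult tendsto_const tendsto_diff inner_lim[OF fm Rez fnn H _ fi]) auto
  next
    case False
    then show ?thesis by (simp add: seq_def limF_def)
  qed
  show ?thesis using borel_measurable_LIMSEQ_metric[OF seqm pw] by simp
qed

definition fL :: "real \<Rightarrow> real \<Rightarrow> real \<Rightarrow> real \<Rightarrow> real \<Rightarrow> real" where
  "fL a bb c s x = a * max 0 (x - (t - s)) + bb * (if t < s + x then 1 else 0)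
      + c * (if 0 < s + x \<and> s + x \<le> t then 1 else 0)"

definition wf :: "nat \<Rightarrow> real \<times> real \<times> (nat \<Rightarrow> real) \<Rightarrow> real" where
  "wf m = (\<lambda>(s, b, S). \<Sum>j<batch_size m b. max 0 (S j - (t - s)))"
definition qf :: "nat \<Rightarrow> real \<times> real \<times> (nat \<Rightarrow> real) \<Rightarrow> real" where
  "qf m = (\<lambda>(s, b, S). real (card {j. j < batch_size m b \<and> t < s + S j}))"
definition df :: "nat \<Rightarrow> real \<times> real \<times> (nat \<Rightarrow> real) \<Rightarrow> real" where
  "df m = (\<lambda>(s, b, S). real (card {j. j < batch_size m b \<and> 0 < s + S j \<and> s + S j \<le> t}))"

lemma workload_eq: "workload m t \<omega> = (\<Sum>i<fst \<omega>. wf m (snd \<omega> i))"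
  by (simp add: workload_def wf_def)
lemma num_present_eq: "num_present m t \<omega> = (\<Sum>i<fst \<omega>. qf m (snd \<omega> i))"
  by (simp add: num_present_def qf_def)
lemma num_departed_eq: "num_departed m t \<omega> = (\<Sum>i<fst \<omega>. df m (snd \<omega> i))"
  by (simp add: num_departed_def df_def)

lemma Gf_fL: "Gf (fL a bb c) (-1) m x = complex_of_real (exp (- (a * wf m x + bb * qf m x + c * df m x) / real m))"
proof -
  obtain s b S where x: "x = (s, b, S)" by (cases x) auto
  let ?n = "batch_size m b"
  have sumeq: "(\<Sum>j<?n. fL a bb c s (S j)) = a * wf m x + bb * qf m x + c * df m x"
    by (simp add: x fL_def wf_def qf_def df_def card_sum sum.distrib sum_distrib_left)
  have "Gf (fL a bb c) (-1) m x = (\<Prod>j<?n. exp (- 1 * of_real (fL a bb c s (S j)) / of_nat m))"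
    by (simp add: Gf_def x)
  also have "\<dots> = exp (\<Sum>j<?n. - 1 * of_real (fL a bb c s (S j)) / of_nat m)"
    by (simp add: exp_sum)
  also have "(\<Sum>j<?n. - 1 * of_real (fL a bb c s (S j)) / of_nat m) = complex_of_real (- (\<Sum>j<?n. fL a bb c s (S j)) / real m)"
    by (simp add: sum_divide_distrib[symmetric] sum_negf)
  also have "exp (complex_of_real (- (\<Sum>j<?n. fL a bb c s (S j)) / real m)) = complex_of_real (exp (- (\<Sum>j<?n. fL a bb c s (S j)) / real m))"
    by (rule exp_of_real)
  finally show ?thesis by (simp only: sumeq)
qed

lemma LHS_eq:
  "complex_of_real (exp (- a * (workload m t \<omega> / real m) - bb * (num_present m t \<omega> / real m) - c * (num_departed m t \<omega> / real m)))
   = (\<Prod>i<fst \<omega>. Gf (fL a bb c) (-1) m (snd \<omega> i))"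
proof -
  have "(\<Prod>i<fst \<omega>. Gf (fL a bb c) (-1) m (snd \<omega> i))
      = complex_of_real (\<Prod>i<fst \<omega>. exp (- (a * wf m (snd \<omega> i) + bb * qf m (snd \<omega> i) + c * df m (snd \<omega> i)) / real m))"
    by (simp add: Gf_fL)
  also have "(\<Prod>i<fst \<omega>. exp (- (a * wf m (snd \<omega> i) + bb * qf m (snd \<omega> i) + c * df m (snd \<omega> i)) / real m))
      = exp (\<Sum>i<fst \<omega>. - (a * wf m (snd \<omega> i) + bb * qf m (snd \<omega> i) + c * df m (snd \<omega> i)) / real m)"
    by (simp add: exp_sum)
  also have "(\<Sum>i<fst \<omega>. - (a * wf m (snd \<omega> i) + bb * qf m (snd \<omega> i) + c * df m (snd \<omega> i)) / real m)
      = - (\<Sum>i<fst \<omega>. a * wf m (snd \<omega> i) + bb * qf m (snd \<omega> i) + c * df m (snd \<omega> i)) / real m"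
    by (simp only: sum_divide_distrib[symmetric] sum_negf)
  also have "(\<Sum>i<fst \<omega>. a * wf m (snd \<omega> i) + bb * qf m (snd \<omega> i) + c * df m (snd \<omega> i))
      = a * workload m t \<omega> + bb * num_present m t \<omega> + c * num_departed m t \<omega>"
    unfolding workload_eq num_present_eq num_departed_eq by (simp add: sum.distrib sum_distrib_left)
  also have "- (a * workload m t \<omega> + bb * num_present m t \<omega> + c * num_departed m t \<omega>) / real m
      = - a * (workload m t \<omega> / real m) - bb * (num_present m t \<omega> / real m) - c * (num_departed m t \<omega> / real m)"
    by (simp add: add_divide_distrib diff_divide_distrib)
  finally show ?thesis by simp
qed

end


context model begin

lemma fL_meas: "(\<lambda>(s, x). fL a bb c s x) \<in> borel_measurable (borel \<Otimes>\<^sub>M borel)"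
  unfolding fL_def by measurable

lemma fL_nn: "0 \<le> a \<Longrightarrow> 0 \<le> bb \<Longrightarrow> 0 \<le> c \<Longrightarrow> 0 \<le> fL a bb c s x"
  unfolding fL_def by simp

lemma Sd_meas: "f \<in> borel_measurable borel \<Longrightarrow> f \<in> borel_measurable (Sd s)"
  by (simp cong: measurable_cong_sets[OF Sd_sets refl])

lemma max_int: "0 \<le> s \<Longrightarrow> integrable (Sd s) (\<lambda>x. max 0 (x - u))"
proof (rule Bochner_Integration.integrable_bound[where f="\<lambda>x. \<bar>x\<bar> + \<bar>u\<bar>"])
  assume s: "0 \<le> s"
  interpret prob_space "Sd s" by (rule Sd_prob)
  show "integrable (Sd s) (\<lambda>x. \<bar>x\<bar> + \<bar>u\<bar>)"
    using Sd_mean[OF s] by (intro Bochner_Integration.integrable_add integrable_abs) auto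
  show "(\<lambda>x. max 0 (x - u)) \<in> borel_measurable (Sd s)" by (intro Sd_meas) simp
  show "AE x in Sd s. norm (max 0 (x - u)) \<le> norm (\<bar>x\<bar> + \<bar>u\<bar>)" by (intro AE_I2) auto
qed

lemma ind_int: "integrable (Sd s) (\<lambda>x. if P x then 1 else (0::real))" if "{x. P x} \<in> sets borel"
proof -
  have "(\<lambda>x. if P x then 1 else (0::real)) = indicator {x. P x}" by (auto simp: indicator_def)
  moreover have "integrable (Sd s) (indicator {x. P x} :: real \<Rightarrow> real)"
    using that by (intro prob_integrable_bound[OF Sd_prob Sd_sets, where C=1]) auto
  ultimately show ?thesis by simp
qed

lemma fL_int: "0 \<le> s \<Longrightarrow> integrable (Sd s) (fL a bb c s)"
  unfolding fL_def
  by (intro Bochner_Integration.integrable_add integrable_mult_right max_int ind_int) auto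

lemma H_neg1: "0 \<le> y \<Longrightarrow> cmod (exp (- 1 * complex_of_real y) - 1) \<le> cmod (- 1::complex) * y"
  using H_real[of 1 y] by simp

lemma tail': assumes s: "0 \<le> s" and u: "0 \<le> u"
  shows "(\<integral>x. max 0 (x - u) \<partial>Sd s) = mean_work Sd s * Fbar_e Sd s u"
proof (cases "mean_work Sd s = 0")
  case True
  interpret prob_space "Sd s" by (rule Sd_prob)
  have "AE x in Sd s. x = 0"
    using True Sd_nonneg[OF s] Sd_mean[OF s] by (subst integral_nonneg_eq_0_iff_AE[symmetric]) (auto simp: mean_work_def)
  then have "AE x in Sd s. max 0 (x - u) = 0" by eventually_elim (use u in simp)
  then have "(\<integral>x. max 0 (x - u) \<partial>Sd s) = 0" by (rule integral_eq_zero_AE)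
  then show ?thesis using True by simp
next
  case False
  have "(\<integral>x. max 0 (x - u) \<partial>Sd s) = (LINT v:{u..}|lborel. 1 - cdf (Sd s) v)"
    by (rule tail_formula[OF Sd_prob Sd_sets Sd_nonneg[OF s] Sd_mean[OF s] u])
  also have "\<dots> = mean_work Sd s * Fbar_e Sd s u"
    using False by (simp add: Fbar_e_def Fbar_def)
  finally show ?thesis .
qed

lemma cs: assumes s: "0 < s" "s \<le> t"
  shows "(\<integral>x. fL a bb c s x \<partial>Sd s) = a * mean_work Sd s * Fbar_e Sd s (t - s) + bb * Fbar Sd s (t - s) + c * cdf (Sd s) (t - s)"
proof -
  interpret prob_space "Sd s" by (rule Sd_prob)
  have s0: "0 \<le> s" using s by simp
  have i1: "integrable (Sd s) (\<lambda>x. if t < s + x then 1 else (0::real))" by (rule ind_int) simp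
  have i2: "integrable (Sd s) (\<lambda>x. if 0 < s + x \<and> s + x \<le> t then 1 else (0::real))" by (rule ind_int) simp
  have "(\<integral>x. fL a bb c s x \<partial>Sd s) = a * (\<integral>x. max 0 (x - (t - s)) \<partial>Sd s)
        + bb * (\<integral>x. (if t < s + x then 1 else 0) \<partial>Sd s) + c * (\<integral>x. (if 0 < s + x \<and> s + x \<le> t then 1 else 0) \<partial>Sd s)"
    unfolding fL_def using max_int[OF s0] i1 i2 by simp
  also have "(\<integral>x. max 0 (x - (t - s)) \<partial>Sd s) = mean_work Sd s * Fbar_e Sd s (t - s)"
    using s by (intro tail') auto
  also have "(\<integral>x. (if t < s + x then 1 else 0) \<partial>Sd s) = Fbar Sd s (t - s)"
  proof -
    have "(\<lambda>x. if t < s + x then 1 else (0::real)) = indicator (space (Sd s) - {..t - s})"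
      using sets_eq_imp_space_eq[OF Sd_sets] by (auto simp: indicator_def fun_eq_iff)
    moreover have "(space (Sd s) - {..t - s}) \<inter> space (Sd s) = space (Sd s) - {..t - s}" by auto
    ultimately have "(\<integral>x. (if t < s + x then 1 else 0) \<partial>Sd s) = measure (Sd s) (space (Sd s) - {..t - s})"
      using Sd_sets by simp
    also have "\<dots> = 1 - measure (Sd s) {..t - s}" using Sd_sets by (subst prob_compl) auto
    finally show ?thesis by (simp add: Fbar_def cdf_def2)
  qed
  also have "(\<integral>x. (if 0 < s + x \<and> s + x \<le> t then 1 else 0) \<partial>Sd s) = cdf (Sd s) (t - s)"
  proof -
    have ae: "AE x in Sd s. (if 0 < s + x \<and> s + x \<le> t then 1 else 0) = (indicator {..t - s} x :: real)"
      using Sd_nonneg[OF s0]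
      by eventually_elim (use s in \<open>auto simp: indicator_def\<close>)
    have m1: "(\<lambda>x. if 0 < s + x \<and> s + x \<le> t then 1 else (0::real)) \<in> borel_measurable (Sd s)"
      by (intro Sd_meas) simp
    have m2: "(\<lambda>x. indicator {..t - s} x :: real) \<in> borel_measurable (Sd s)"
      by (intro Sd_meas) simp
    have "(\<integral>x. (if 0 < s + x \<and> s + x \<le> t then 1 else (0::real)) \<partial>Sd s) = (\<integral>x. indicator {..t - s} x \<partial>Sd s)"
      by (rule Bochner_Integration.integral_cong_AE[OF m1 m2 ae])
    also have "\<dots> = measure (Sd s) {..t - s}" using Sd_sets by simp
    finally show ?thesis by (simp add: cdf_def2)
  qed
  finally show ?thesis by simp
qed

end


context model begin

lemma limF_fL:
  assumes abc: "0 \<le> a" "0 \<le> bb" "0 \<le> c" and s0: "s \<noteq> 0"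
  shows "limF (fL a bb c) (-1) s = - of_real (indicator {0..t} s * ((\<integral>b. 1 - exp (- b * (a * mean_work Sd s * Fbar_e Sd s (t - s)
          + bb * Fbar Sd s (t - s) + c * cdf (Sd s) (t - s))) \<partial>B s) * lam s))"
proof (cases "s \<in> {0..t}")
  case False
  then show ?thesis by (simp add: limF_def)
next
  case True
  then have s: "0 < s" "s \<le> t" using s0 by auto
  interpret Bs: prob_space "B s" by (rule B_prob)
  define C where "C = a * mean_work Sd s * Fbar_e Sd s (t - s) + bb * Fbar Sd s (t - s) + c * cdf (Sd s) (t - s)"
  have Ceq: "(\<integral>x. fL a bb c s x \<partial>Sd s) = C" unfolding C_def using s by (rule cs)
  have C0: "0 \<le> C" unfolding Ceq[symmetric] by (intro integral_nonneg_AE AE_I2 fL_nn abc)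
  have em: "(\<lambda>b. exp (- b * C)) \<in> borel_measurable (B s)"
    by (simp cong: measurable_cong_sets[OF B_sets refl])
  have ei: "integrable (B s) (\<lambda>b. exp (- b * C))"
  proof (rule Bs.integrable_const_bound[where B=1])
    show "AE b in B s. norm (exp (- b * C)) \<le> 1"
      using B_nonneg[of s] s by (auto elim!: eventually_mono intro!: mult_nonneg_nonneg C0)
  qed (rule em)
  let ?E = "\<integral>b. exp (- b * C) \<partial>B s"
  have "limF (fL a bb c) (-1) s = of_real (lam s) * ((\<integral>b. exp (of_real b * (- 1 * of_real C)) \<partial>B s) - 1)"
    using True by (simp add: limF_def Ceq)
  also have "(\<integral>b. exp (of_real b * (- 1 * of_real C)) \<partial>B s) = (\<integral>b. complex_of_real (exp (- b * C)) \<partial>B s)"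
  proof (rule Bochner_Integration.integral_cong[OF refl])
    fix b
    have "complex_of_real b * (- 1 * complex_of_real C) = complex_of_real (- b * C)" by simp
    then show "exp (complex_of_real b * (- 1 * complex_of_real C)) = complex_of_real (exp (- b * C))"
      by (simp only: exp_of_real)
  qed
  also have "\<dots> = complex_of_real ?E" by simp
  finally have X: "limF (fL a bb c) (-1) s = of_real (lam s) * (complex_of_real ?E - 1)" .
  have Y: "(\<integral>b. 1 - exp (- b * C) \<partial>B s) = 1 - ?E"
    using ei by (simp add: Bs.prob_space)
  have "- of_real (indicator {0..t} s * ((\<integral>b. 1 - exp (- b * C) \<partial>B s) * lam s)) = - complex_of_real ((1 - ?E) * lam s)"
    using True Y by simp
  also have "\<dots> = of_real (lam s) * (complex_of_real ?E - 1)" by (simp add: algebra_simps)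
  finally show ?thesis using X unfolding C_def by simp
qed

theorem conj1:
  assumes abc: "0 \<le> a" "0 \<le> bb" "0 \<le> c"
  shows "(\<lambda>m::nat. \<integral>\<omega>. exp (- a * (workload m t \<omega> / real m) - bb * (num_present m t \<omega> / real m)
                        - c * (num_departed m t \<omega> / real m)) \<partial>queue_sample lam B Sd t)
      \<longlonglongrightarrow> exp (- (LINT s:{0..t}|lborel.
            (\<integral>b. 1 - exp (- b * (a * mean_work Sd s * Fbar_e Sd s (t - s)
                                 + bb * Fbar Sd s (t - s) + c * cdf (Sd s) (t - s))) \<partial>B s) * lam s))"
proof -
  define R where "R s = (\<integral>b. 1 - exp (- b * (a * mean_work Sd s * Fbar_e Sd s (t - s)
                                 + bb * Fbar Sd s (t - s) + c * cdf (Sd s) (t - s))) \<partial>B s) * lam s" for s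
  define T where "T = (LINT s:{0..t}|lborel. R s)"
  define G where "G s = - complex_of_real (indicator {0..t} s * R s)" for s
  have Rez: "Re (-1::complex) \<le> 0" by simp
  note ql = QS_lim[OF fL_meas Rez fL_nn[OF abc] H_neg1 fL_int]
  note lm = limF_meas[OF fL_meas Rez fL_nn[OF abc] H_neg1 fL_int]
  have Gne: "s \<noteq> 0 \<Longrightarrow> limF (fL a bb c) (-1) s = G s" for s
    unfolding G_def R_def by (rule limF_fL[OF abc])
  have Gm: "G \<in> borel_measurable borel"
  proof -
    have "(\<lambda>s. if s \<in> {0} then G 0 else limF (fL a bb c) (-1) s) \<in> borel_measurable borel"
      by (rule measurable_If_set[OF measurable_const lm]) auto
    moreover have "(\<lambda>s. if s \<in> {0} then G 0 else limF (fL a bb c) (-1) s) = G"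
      using Gne by (auto simp: fun_eq_iff)
    ultimately show ?thesis by simp
  qed
  have "(\<integral>s. limF (fL a bb c) (-1) s \<partial>lborel) = (\<integral>s. G s \<partial>lborel)"
  proof (rule Bochner_Integration.integral_cong_AE)
    show "AE s in lborel. limF (fL a bb c) (-1) s = G s"
      using AE_lborel_singleton[of "0::real"] by eventually_elim (rule Gne)
  qed (use lm Gm in auto)
  also have "\<dots> = - complex_of_real (\<integral>s. indicator {0..t} s * R s \<partial>lborel)"
    by (simp only: G_def integral_minus integral_complex_of_real)
  also have "\<dots> = complex_of_real (- T)"
    by (simp add: T_def set_lebesgue_integral_def)
  finally have intEq: "(\<integral>s. limF (fL a bb c) (-1) s \<partial>lborel) = complex_of_real (- T)" .
  have lhs: "(\<integral>\<omega>. (\<Prod>i<fst \<omega>. Gf (fL a bb c) (-1) m (snd \<omega> i)) \<partial>queue_sample lam B Sd t)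
      = complex_of_real (\<integral>\<omega>. exp (- a * (workload m t \<omega> / real m) - bb * (num_present m t \<omega> / real m)
                        - c * (num_departed m t \<omega> / real m)) \<partial>queue_sample lam B Sd t)" for m
    by (simp only: LHS_eq[symmetric] integral_complex_of_real)
  have "(\<lambda>m. complex_of_real (\<integral>\<omega>. exp (- a * (workload m t \<omega> / real m) - bb * (num_present m t \<omega> / real m)
                        - c * (num_departed m t \<omega> / real m)) \<partial>queue_sample lam B Sd t)) \<longlonglongrightarrow> complex_of_real (exp (- T))"
  proof -
    have "exp (complex_of_real (- T)) = complex_of_real (exp (- T))" by (rule exp_of_real)
    then show ?thesis using ql unfolding lhs intEq by simp
  qed
  then show ?thesis unfolding tendsto_of_real_iff T_def R_def .
qed

end


context model begin

lemma cdf_joint: "(\<lambda>(s, v). cdf (Sd s) v) \<in> borel_measurable (borel \<Otimes>\<^sub>M borel)"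
proof -
  have A: "(SIGMA p:space (borel \<Otimes>\<^sub>M (borel::real measure)). {..snd p}) \<in> sets ((borel \<Otimes>\<^sub>M borel) \<Otimes>\<^sub>M (borel::real measure))"
  proof -
    have X: "{q \<in> space ((borel \<Otimes>\<^sub>M borel) \<Otimes>\<^sub>M (borel::real measure)). snd q \<le> snd (fst q)} \<in> sets ((borel \<Otimes>\<^sub>M borel) \<Otimes>\<^sub>M (borel::real measure))"
      by measurable
    have Y: "{q \<in> space ((borel \<Otimes>\<^sub>M borel) \<Otimes>\<^sub>M (borel::real measure)). snd q \<le> snd (fst q)} = (SIGMA p:space (borel \<Otimes>\<^sub>M (borel::real measure)). {..snd p})"
      by (auto simp: space_pair_measure)
    show ?thesis using X unfolding Y .
  qed
  have L: "(\<lambda>p. Sd (fst p)) \<in> borel \<Otimes>\<^sub>M (borel::real measure) \<rightarrow>\<^sub>M prob_algebra borel"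
    using measurable_compose[OF measurable_fst Sd_kernel] by simp
  have "(\<lambda>p. measure (Sd (fst p)) {..snd p}) \<in> borel_measurable (borel \<Otimes>\<^sub>M borel)"
    by (rule measure_measurable_prob_algebra2[OF A L])
  then show ?thesis by (simp add: cdf_def2 case_prod_beta')
qed

lemma mean_meas: "(\<lambda>s. mean_work Sd s) \<in> borel_measurable borel"
  unfolding mean_work_def
  by (rule measurable_compose[OF measurable_prob_algebraD[OF Sd_kernel] integral_measurable_subprob_algebra]) simp

lemma c_meas: "(\<lambda>s. mean_work Sd s * Fbar_e Sd s (t - s)) \<in> borel_measurable borel"
proof -
  define f where "f s v = indicator {t - s..} v *\<^sub>R Fbar Sd s v" for s v :: real
  have fm0: "(\<lambda>p. f (fst p) (snd p)) \<in> borel_measurable (borel \<Otimes>\<^sub>M (borel::real measure))"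
  proof -
    have "(\<lambda>p. (if t - fst p \<le> snd p then 1 else 0) * (1 - cdf (Sd (fst p)) (snd p))) \<in> borel_measurable (borel \<Otimes>\<^sub>M (borel::real measure))"
      using cdf_joint by (simp add: case_prod_beta') measurable
    moreover have "(\<lambda>p. f (fst p) (snd p)) = (\<lambda>p. (if t - fst p \<le> snd p then 1 else 0) * (1 - cdf (Sd (fst p)) (snd p)))"
      by (auto simp: f_def Fbar_def indicator_def fun_eq_iff)
    ultimately show ?thesis by simp
  qed
  have fm: "case_prod f \<in> borel_measurable (borel \<Otimes>\<^sub>M lborel)"
  proof -
    have "sets (borel \<Otimes>\<^sub>M lborel) = sets (borel \<Otimes>\<^sub>M (borel::real measure))"
      by (rule sets_pair_measure_cong) simp_all
    then show ?thesis using fm0 by (simp add: case_prod_beta' cong: measurable_cong_sets)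
  qed
  have "(\<lambda>s. \<integral>v. f s v \<partial>lborel) \<in> borel_measurable borel"
    by (rule lborel.borel_measurable_lebesgue_integral[OF fm])
  then have "(\<lambda>s. mean_work Sd s * ((1 / mean_work Sd s) * (\<integral>v. f s v \<partial>lborel))) \<in> borel_measurable borel"
    using mean_meas by measurable
  then show ?thesis by (simp add: Fbar_e_def set_lebesgue_integral_def f_def)
qed

definition fW :: "real \<Rightarrow> real \<Rightarrow> real" where "fW s x = max 0 (x - (t - s))"

lemma wf_meas: "wf m \<in> borel_measurable mark_space"
proof -
  have "(\<lambda>x. (\<lambda>n x. \<Sum>j<n. max 0 (snd (snd x) j - (t - fst x))) (batch_size m (fst (snd x))) x) \<in> borel_measurable mark_space"
  proof (rule measurable_compose_countable'[where I=UNIV and g="\<lambda>x. batch_size m (fst (snd x))" and f="\<lambda>n x. \<Sum>j<n. max 0 (snd (snd x) j - (t - fst x))"])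
    fix n :: nat
    show "(\<lambda>x. \<Sum>j<n. max 0 (snd (snd x) j - (t - fst x))) \<in> borel_measurable mark_space"
      unfolding mark_space_def by measurable
    show "(\<lambda>x. batch_size m (fst (snd x))) \<in> mark_space \<rightarrow>\<^sub>M count_space UNIV"
      unfolding mark_space_def by measurable
  qed auto
  moreover have "wf m = (\<lambda>x. (\<lambda>n x. \<Sum>j<n. max 0 (snd (snd x) j - (t - fst x))) (batch_size m (fst (snd x))) x)"
    by (auto simp: wf_def fun_eq_iff)
  ultimately show ?thesis by simp
qed

lemma Xm_meas: "(\<lambda>\<omega>. workload m t \<omega> / real m) \<in> borel_measurable (queue_sample lam B Sd t)"
  unfolding workload_eq using F_sum_meas[OF wf_meas] by measurable

lemma h_meas: "(\<lambda>(s, b, S). b * mean_work Sd s * Fbar_e Sd s (t - s)) \<in> borel_measurable mark_space"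
proof -
  have "(\<lambda>x. fst (snd x) * (mean_work Sd (fst x) * Fbar_e Sd (fst x) (t - fst x))) \<in> borel_measurable mark_space"
    unfolding mark_space_def using c_meas by measurable
  then show ?thesis by (simp add: case_prod_beta' mult.assoc)
qed

lemma sn_meas: "(\<lambda>\<omega>. \<Sum>i<fst \<omega>. (case snd \<omega> i of (s, b, S) \<Rightarrow> b * mean_work Sd s * Fbar_e Sd s (t - s))) \<in> borel_measurable (queue_sample lam B Sd t)"
  using F_sum_meas[OF h_meas] by simp

lemma QS_sets: "sets (queue_sample lam B Sd t) = sets (queue_sample lam B Sd t)" ..

lemma realdist: "f \<in> borel_measurable (queue_sample lam B Sd t) \<Longrightarrow> real_distribution (distr (queue_sample lam B Sd t) borel f)"
  unfolding real_distribution_def real_distribution_axioms_def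
  using QS_prob by (auto intro: prob_space.prob_space_distr)

end


context model begin

lemma fW_meas: "(\<lambda>(s, x). fW s x) \<in> borel_measurable (borel \<Otimes>\<^sub>M borel)"
  unfolding fW_def by measurable

lemma Gf_fW: "Gf fW z m x = exp (z * of_real (wf m x) / of_nat m)"
proof -
  obtain s b S where x: "x = (s, b, S)" by (cases x) auto
  have "Gf fW z m x = (\<Prod>j<batch_size m b. exp (z * of_real (fW s (S j)) / of_nat m))"
    by (simp add: Gf_def x)
  also have "\<dots> = exp (\<Sum>j<batch_size m b. z * of_real (fW s (S j)) / of_nat m)"
    by (simp add: exp_sum)
  also have "(\<Sum>j<batch_size m b. z * of_real (fW s (S j)) / of_nat m) = z * of_real (wf m x) / of_nat m"
    by (simp add: x wf_def fW_def sum_divide_distrib[symmetric] sum_distrib_left[symmetric])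
  finally show ?thesis .
qed

lemma char_Xm: "char (distr (queue_sample lam B Sd t) borel (\<lambda>\<omega>. workload m t \<omega> / real m)) \<theta>
   = (\<integral>\<omega>. (\<Prod>i<fst \<omega>. Gf fW (\<i> * of_real \<theta>) m (snd \<omega> i)) \<partial>queue_sample lam B Sd t)"
proof -
  have "char (distr (queue_sample lam B Sd t) borel (\<lambda>\<omega>. workload m t \<omega> / real m)) \<theta>
      = (\<integral>\<omega>. iexp (\<theta> * (workload m t \<omega> / real m)) \<partial>queue_sample lam B Sd t)"
    unfolding char_def by (rule integral_distr[OF Xm_meas]) simp
  also have "\<dots> = (\<integral>\<omega>. (\<Prod>i<fst \<omega>. Gf fW (\<i> * of_real \<theta>) m (snd \<omega> i)) \<partial>queue_sample lam B Sd t)"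
  proof (rule Bochner_Integration.integral_cong[OF refl])
    fix \<omega> :: "nat \<times> (nat \<Rightarrow> real \<times> real \<times> (nat \<Rightarrow> real))"
    have "(\<Prod>i<fst \<omega>. Gf fW (\<i> * of_real \<theta>) m (snd \<omega> i)) = exp (\<Sum>i<fst \<omega>. \<i> * of_real \<theta> * of_real (wf m (snd \<omega> i)) / of_nat m)"
      unfolding Gf_fW by (rule exp_sum[symmetric]) simp
    also have "(\<Sum>i<fst \<omega>. \<i> * of_real \<theta> * of_real (wf m (snd \<omega> i)) / of_nat m) = \<i> * complex_of_real (\<theta> * (workload m t \<omega> / real m))"
      unfolding workload_eq by (simp add: sum_divide_distrib[symmetric] sum_distrib_left[symmetric])
    finally show "iexp (\<theta> * (workload m t \<omega> / real m)) = (\<Prod>i<fst \<omega>. Gf fW (\<i> * of_real \<theta>) m (snd \<omega> i))" by simp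
  qed
  finally show ?thesis .
qed

lemma char_shot: "char (shot_noise lam B Sd t) \<theta> = exp (\<integral>s. limF fW (\<i> * of_real \<theta>) s \<partial>lborel)"
proof -
  define h :: "real \<times> real \<times> (nat \<Rightarrow> real) \<Rightarrow> real" where "h = (\<lambda>(s, b, S). b * mean_work Sd s * Fbar_e Sd s (t - s))"
  define g where "g x = exp (\<i> * complex_of_real (\<theta> * h x))" for x
  have hm: "h \<in> borel_measurable mark_space" unfolding h_def by (rule h_meas)
  have gm: "g \<in> borel_measurable mark_space" unfolding g_def using hm by measurable
  have gb: "cmod (g x) \<le> 1" for x unfolding g_def by simp
  have "char (shot_noise lam B Sd t) \<theta> = (\<integral>\<omega>. iexp (\<theta> * (\<Sum>i<fst \<omega>. h (snd \<omega> i))) \<partial>queue_sample lam B Sd t)"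
    unfolding char_def shot_noise_def h_def by (rule integral_distr[OF sn_meas]) simp
  also have "\<dots> = (\<integral>\<omega>. (\<Prod>i<fst \<omega>. g (snd \<omega> i)) \<partial>queue_sample lam B Sd t)"
    by (intro Bochner_Integration.integral_cong refl) (simp add: g_def exp_sum[symmetric] sum_distrib_left)
  also have "\<dots> = exp (of_real Lam * ((\<integral>x. g x \<partial>MD) - 1))" by (rule CP[OF gm gb])
  also have "of_real Lam * ((\<integral>x. g x \<partial>MD) - 1) = (\<integral>s. of_real (indicator {0..t} s * lam s) * ((\<integral>x. g x \<partial>K s) - 1) \<partial>lborel)"
    by (rule Lam_MD[OF gm gb])
  also have "\<dots> = (\<integral>s. limF fW (\<i> * of_real \<theta>) s \<partial>lborel)"
  proof (rule Bochner_Integration.integral_cong[OF refl])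
    fix s
    show "of_real (indicator {0..t} s * lam s) * ((\<integral>x. g x \<partial>K s) - 1) = limF fW (\<i> * of_real \<theta>) s"
    proof (cases "s \<in> {0..t}")
      case False then show ?thesis by (simp add: limF_def)
    next
      case True
      then have s0: "0 \<le> s" and u0: "0 \<le> t - s" by auto
      define c where "c = mean_work Sd s * Fbar_e Sd s (t - s)"
      have ic: "(\<integral>x. fW s x \<partial>Sd s) = c" unfolding fW_def c_def by (rule tail'[OF s0 u0])
      have "(\<integral>x. g x \<partial>K s) = (\<integral>b. (\<integral>S. g (s, b, S) \<partial>PiM UNIV (\<lambda>_. Sd s)) \<partial>B s)"
        by (rule K_int[OF gm gb])
      also have "\<dots> = (\<integral>b. exp (of_real b * (\<i> * of_real \<theta> * of_real c)) \<partial>B s)"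
      proof (rule Bochner_Integration.integral_cong[OF refl])
        fix b
        interpret P: prob_space "PiM (UNIV::nat set) (\<lambda>_. Sd s)" using Sd_prob by (intro prob_space_PiM) auto
        have "g (s, b, S) = exp (of_real b * (\<i> * of_real \<theta> * of_real c))" for S
        proof -
          have eq: "\<i> * complex_of_real (\<theta> * h (s, b, S)) = of_real b * (\<i> * of_real \<theta> * of_real c)"
            by (simp add: h_def c_def algebra_simps)
          show ?thesis by (simp only: g_def eq)
        qed
        then show "(\<integral>S. g (s, b, S) \<partial>PiM UNIV (\<lambda>_. Sd s)) = exp (of_real b * (\<i> * of_real \<theta> * of_real c))"
          by (simp add: P.prob_space)
      qed
      finally show ?thesis using True by (simp add: limF_def ic)
    qed
  qed
  finally show ?thesis .
qed

theorem conj3: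
  "weak_conv_m (\<lambda>m. distr (queue_sample lam B Sd t) borel (\<lambda>\<omega>. workload m t \<omega> / real m))
        (shot_noise lam B Sd t)"
proof (rule levy_continuity)
  show "real_distribution (distr (queue_sample lam B Sd t) borel (\<lambda>\<omega>. workload m t \<omega> / real m))" for m
    by (rule realdist[OF Xm_meas])
  show "real_distribution (shot_noise lam B Sd t)"
    unfolding shot_noise_def by (rule realdist[OF sn_meas])
  fix \<theta> :: real
  have Rez: "Re (\<i> * complex_of_real \<theta>) \<le> 0" by simp
  have fnn: "0 \<le> fW s x" for s x by (simp add: fW_def)
  have H: "cmod (exp (\<i> * complex_of_real \<theta> * of_real y) - 1) \<le> cmod (\<i> * complex_of_real \<theta>) * y" if "0 \<le> y" for y
    using H_imag[of \<theta> y] that by simp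
  have fi: "integrable (Sd s) (fW s)" if "0 \<le> s" for s
    unfolding fW_def[abs_def] using max_int[OF that] by simp
  show "(\<lambda>m. char (distr (queue_sample lam B Sd t) borel (\<lambda>\<omega>. workload m t \<omega> / real m)) \<theta>) \<longlonglongrightarrow> char (shot_noise lam B Sd t) \<theta>"
    unfolding char_Xm char_shot by (rule QS_lim[OF fW_meas Rez fnn H fi])
qed

end


theorem theorem6:
  fixes lam :: "real \<Rightarrow> real"
    and B Sd :: "real \<Rightarrow> real measure"
    and t \<alpha> \<beta> \<gamma> :: real
  assumes lam_nonneg: "\<And>s. 0 \<le> s \<Longrightarrow> 0 \<le> lam s"
    and lam_meas: "lam \<in> borel_measurable borel"
    and lam_int: "\<And>u. 0 \<le> u \<Longrightarrow> set_integrable lborel {0..u} lam"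
    and B_kernel: "B \<in> borel \<rightarrow>\<^sub>M prob_algebra borel"
    and B_nonneg: "\<And>s. 0 \<le> s \<Longrightarrow> AE b in B s. 0 \<le> b"
    and Sd_kernel: "Sd \<in> borel \<rightarrow>\<^sub>M prob_algebra borel"
    and Sd_nonneg: "\<And>s. 0 \<le> s \<Longrightarrow> AE x in Sd s. 0 \<le> x"
    and Sd_mean: "\<And>s. 0 \<le> s \<Longrightarrow> integrable (Sd s) (\<lambda>x. x)"
    and t: "0 \<le> t"
    and abc: "0 \<le> \<alpha>" "0 \<le> \<beta>" "0 \<le> \<gamma>"
  shows
   "((\<lambda>m::nat. \<integral>\<omega>. exp (- \<alpha> * (workload m t \<omega> / real m) - \<beta> * (num_present m t \<omega> / real m)
                        - \<gamma> * (num_departed m t \<omega> / real m)) \<partial>queue_sample lam B Sd t)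
      \<longlongrightarrow> exp (- (LINT s:{0..t}|lborel.
            (\<integral>b. 1 - exp (- b * (\<alpha> * mean_work Sd s * Fbar_e Sd s (t - s)
                                 + \<beta> * Fbar Sd s (t - s) + \<gamma> * cdf (Sd s) (t - s))) \<partial>B s) * lam s)))
      sequentially
    \<and> ((\<lambda>m::nat. \<integral>\<omega>. exp (- \<alpha> * (workload m t \<omega> / real m)) \<partial>queue_sample lam B Sd t)
      \<longlongrightarrow> exp (- (LINT s:{0..t}|lborel.
            (\<integral>b. 1 - exp (- b * \<alpha> * mean_work Sd s * Fbar_e Sd s (t - s)) \<partial>B s) * lam s)))
      sequentially
    \<and> weak_conv_m (\<lambda>m. distr (queue_sample lam B Sd t) borel (\<lambda>\<omega>. workload m t \<omega> / real m))
        (shot_noise lam B Sd t)"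
proof -
  interpret model lam B Sd t
    by (rule model.intro[OF lam_nonneg lam_meas lam_int B_kernel B_nonneg Sd_kernel Sd_nonneg Sd_mean t])
  have c1: "((\<lambda>m::nat. \<integral>\<omega>. exp (- \<alpha> * (workload m t \<omega> / real m) - \<beta> * (num_present m t \<omega> / real m)
                        - \<gamma> * (num_departed m t \<omega> / real m)) \<partial>queue_sample lam B Sd t)
      \<longlongrightarrow> exp (- (LINT s:{0..t}|lborel.
            (\<integral>b. 1 - exp (- b * (\<alpha> * mean_work Sd s * Fbar_e Sd s (t - s)
                                 + \<beta> * Fbar Sd s (t - s) + \<gamma> * cdf (Sd s) (t - s))) \<partial>B s) * lam s)))
      sequentially"
    by (rule conj1[OF abc])
  have c2: "((\<lambda>m::nat. \<integral>\<omega>. exp (- \<alpha> * (workload m t \<omega> / real m)) \<partial>queue_sample lam B Sd t)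
      \<longlongrightarrow> exp (- (LINT s:{0..t}|lborel.
            (\<integral>b. 1 - exp (- b * \<alpha> * mean_work Sd s * Fbar_e Sd s (t - s)) \<partial>B s) * lam s)))
      sequentially"
  proof -
    have "0 \<le> (0::real)" by simp
    from conj1[OF abc(1) this this] show ?thesis by (simp add: mult.assoc)
  qed
  show ?thesis using c1 c2 conj3 by blast
qed

end
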